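(* For all positive integers $n$ and $k$ with $k\le 2^n$, we have $v_2\big(H(2^n,k)\big)\le -n$.
   Context: For positive integers $N\ge k$, $H(N,k)=\sum_{1\le i_1<\cdots<i_k\le N}\frac{1}{i_1\cdots i_k}$ is the $k$-th elementary symmetric function of $1,\frac12,\dots,\frac1N$. For a nonzero rational $x=n_1/n_2$ with integers $n_1,n_2$, $v_2(x)=v_2(n_1)-v_2(n_2)$, where $v_2$ is the $2$-adic valuation. *)

theory Defs
  imports "HOL-Computational_Algebra.Computational_Algebra"
begin

definition H :: "nat \<Rightarrow> nat \<Rightarrow> rat" where
  "H N k = (\<Sum>S | S \<subseteq> {1..N} \<and> card S = k. \<Prod>i\<in>S. 1 / of_nat i)"

definition v2 :: "rat \<Rightarrow> int" where
  "v2 x = (let (a, b) = quotient_of x in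
             int (multiplicity (2::int) a) - int (multiplicity (2::int) b))"

end

theory Submission
  imports Defs
begin

function v2n :: "nat \<Rightarrow> nat" where
  "v2n a = (if a = 0 \<or> odd a then 0 else Suc (v2n (a div 2)))"
  by auto
termination by (relation "measure id") auto

declare v2n.simps[simp del]

lemma v2n_decomp: "a > 0 \<Longrightarrow> \<exists>c. a = 2^(v2n a) * c \<and> odd c"
proof (induction a rule: less_induct)
  case (less a)
  show ?case
  proof (cases "odd a")
    case True
    then show ?thesis by (subst v2n.simps) auto
  next
    case False
    then have a2: "a div 2 < a" "a div 2 > 0" using less.prems by auto
    from less.IH[OF a2] obtain c where c: "a div 2 = 2^(v2n (a div 2)) * c" "odd c" by blast
    have "v2n a = Suc (v2n (a div 2))" using False less.prems by (subst v2n.simps) auto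
    moreover have "a = 2 * (a div 2)" using False by simp
    ultimately show ?thesis using c by (intro exI[of _ c]) (simp add: mult.assoc)
  qed
qed

lemma pow2_dvd_odd_mult: assumes "odd (c::nat)" "2^e dvd 2^v * c" shows "e \<le> v"
proof (rule ccontr)
  assume "\<not> e \<le> v"
  then have "(2::nat)^e = 2^v * 2^(e-v)" by (simp add: power_add[symmetric])
  with assms(2) have "2^v * 2^(e-v) dvd 2^v * c" by simp
  then have "2^(e-v) dvd c" by (simp add: nat_mult_dvd_cancel_disj)
  moreover have "(2::nat) dvd 2^(e-v)" using \<open>\<not> e \<le> v\<close> by simp
  ultimately show False using assms(1) dvd_trans by blast
qed

lemma v2n_dvd_iff: "a > 0 \<Longrightarrow> (2^e dvd a) \<longleftrightarrow> e \<le> v2n a"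
proof -
  assume a: "a > 0"
  obtain c where c: "a = 2^(v2n a) * c" "odd c" using v2n_decomp[OF a] by blast
  show ?thesis
  proof
    assume "2^e dvd a" then show "e \<le> v2n a" using pow2_dvd_odd_mult[OF c(2)] c(1) by metis
  next
    assume "e \<le> v2n a"
    then have "(2::nat)^e dvd 2^(v2n a)" by (simp add: le_imp_power_dvd)
    then show "2^e dvd a" using c(1) by (metis dvd_mult2)
  qed
qed

lemma v2n_dvd: "2^(v2n a) dvd a"
  by (cases "a = 0") (auto simp: v2n_dvd_iff)

lemma v2n_pow_le: "a > 0 \<Longrightarrow> 2^(v2n a) \<le> a"
  using v2n_dvd dvd_imp_le by blast

lemma v2n_lt: "0 < a \<Longrightarrow> a < 2^q \<Longrightarrow> v2n a < q"
proof (rule ccontr)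
  assume "0 < a" "a < 2^q" "\<not> v2n a < q"
  then have "(2::nat)^q \<le> 2^(v2n a)" by simp
  with v2n_pow_le[OF \<open>0 < a\<close>] \<open>a < 2^q\<close> show False by linarith
qed

lemma v2n_le: "0 < a \<Longrightarrow> a \<le> 2^q \<Longrightarrow> v2n a \<le> q"
  using v2n_lt[of a "Suc q"] by simp

lemma two_mult_le_pow: "2 * v \<le> (2::nat)^v"
proof (induction v)
  case (Suc v) then show ?case by (cases v) auto
qed simp

lemma v2n_twice_le: "2 * v2n a \<le> a"
proof (cases "a = 0")
  case True then show ?thesis by (simp add: v2n.simps)
next
  case False then show ?thesis using v2n_pow_le[of a] two_mult_le_pow[of "v2n a"] by linarith
qed

lemma v2n_odd[simp]: "odd a \<Longrightarrow> v2n a = 0"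
  by (subst v2n.simps) auto

lemma v2n_0[simp]: "v2n 0 = 0" by (subst v2n.simps) auto

lemma v2n_pow2[simp]: "v2n (2^q) = q"
proof -
  have "2^q dvd (2::nat)^q" by simp
  then have "q \<le> v2n (2^q)" using v2n_dvd_iff[of "2^q" q] by simp
  moreover have "v2n (2^q) \<le> q" using v2n_le[of "2^q" q] by simp
  ultimately show ?thesis by simp
qed

lemma v2n_eqI: "0 < a \<Longrightarrow> 2^e dvd a \<Longrightarrow> \<not> 2^(Suc e) dvd a \<Longrightarrow> v2n a = e"
  using v2n_dvd_iff by (meson le_antisym not_less_eq_eq)

lemma v2n_double: "0 < a \<Longrightarrow> v2n (2 * a) = Suc (v2n a)"
proof -
  assume a: "0 < a"
  obtain c where c: "a = 2^(v2n a) * c" "odd c" using v2n_decomp[OF a] by blast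
  have "2 * a = 2^(Suc (v2n a)) * c" using c by simp
  show ?thesis
  proof (rule v2n_eqI)
    show "2^Suc (v2n a) dvd 2 * a" using v2n_dvd[of a] by simp
    show "\<not> 2^Suc (Suc (v2n a)) dvd 2 * a"
      using v2n_dvd_iff[OF a, of "Suc (v2n a)"] by simp
  qed (use a in simp)
qed

lemma v2n_add_ge: "0 < a \<Longrightarrow> 0 < b \<Longrightarrow> min (v2n a) (v2n b) \<le> v2n (a + b)"
proof -
  assume a: "0 < a" and b: "0 < b"
  let ?m = "min (v2n a) (v2n b)"
  have "2^?m dvd a" using v2n_dvd_iff[OF a] by simp
  moreover have "2^?m dvd b" using v2n_dvd_iff[OF b] by simp
  ultimately have "2^?m dvd a + b" by simp
  then show ?thesis using v2n_dvd_iff[of "a+b" ?m] a by simp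
qed

lemma v2n_add_lt: "0 < a \<Longrightarrow> 0 < b \<Longrightarrow> v2n a < v2n b \<Longrightarrow> v2n (a + b) = v2n a"
proof -
  assume a: "0 < a" and b: "0 < b" and lt: "v2n a < v2n b"
  show ?thesis
  proof (rule v2n_eqI)
    show "2^v2n a dvd a + b" using v2n_dvd_iff[OF a] v2n_dvd_iff[OF b] lt by simp
    show "\<not> 2^Suc (v2n a) dvd a + b"
    proof
      assume h: "2^Suc (v2n a) dvd a + b"
      have "2^Suc (v2n a) dvd b" using v2n_dvd_iff[OF b, of "Suc (v2n a)"] lt by simp
      with h have "2^Suc (v2n a) dvd a" by (simp add: dvd_add_left_iff)
      then show False using v2n_dvd_iff[OF a, of "Suc (v2n a)"] by simp
    qed
  qed (use a in simp)
qed

lemma v2n_add_eq: "0 < a \<Longrightarrow> 0 < b \<Longrightarrow> v2n a = v2n b \<Longrightarrow> v2n a < v2n (a + b)"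
proof -
  assume a: "0 < a" and b: "0 < b" and eq: "v2n a = v2n b"
  obtain c where c: "a = 2^(v2n a) * c" "odd c" using v2n_decomp[OF a] by blast
  obtain d where d: "b = 2^(v2n b) * d" "odd d" using v2n_decomp[OF b] by blast
  have "a + b = 2^(v2n a) * (c + d)" using c d eq by (simp add: algebra_simps)
  moreover have "even (c + d)" using c d by simp
  ultimately have "2^Suc (v2n a) dvd a + b" by (auto simp: mult_dvd_mono)
  then show ?thesis using v2n_dvd_iff[of "a+b" "Suc (v2n a)"] a by simp
qed

lemma v2n_pow_minus: "0 < x \<Longrightarrow> x < 2^q \<Longrightarrow> v2n (2^q - x) = v2n x"
proof (rule ccontr)
  assume x: "0 < x" "x < 2^q" and ne: "v2n (2^q - x) \<noteq> v2n x"
  have y: "0 < 2^q - x" using x by simp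
  have s: "(2^q - x) + x = 2^q" using x by simp
  have lx: "v2n x < q" using v2n_lt x by blast
  have ly: "v2n (2^q - x) < q" using v2n_lt[OF y, of q] x by simp
  show False
  proof (cases "v2n (2^q - x) < v2n x")
    case True
    then have "v2n ((2^q - x) + x) = v2n (2^q - x)" using v2n_add_lt[OF y x(1)] by simp
    then show False using s ly by simp
  next
    case False
    then have "v2n x < v2n (2^q - x)" using ne by simp
    then have "v2n (x + (2^q - x)) = v2n x" using v2n_add_lt[OF x(1) y] by simp
    then show False using s lx by (simp add: add.commute)
  qed
qed


definition cl :: "nat \<Rightarrow> nat" where "cl k = (LEAST p. k \<le> 2^p)"

lemma cl_ub: "k \<le> 2^(cl k)"
  unfolding cl_def by (rule LeastI[of _ k]) (simp add: less_imp_le)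

lemma cl_le: "k \<le> 2^m \<Longrightarrow> cl k \<le> m"
  unfolding cl_def by (rule Least_le)

lemma cl_gt: assumes "2 \<le> k" shows "1 \<le> cl k" "2^(cl k - 1) < k"
proof -
  show "1 \<le> cl k"
  proof (rule ccontr)
    assume "\<not> 1 \<le> cl k" then have "cl k = 0" by simp
    then show False using cl_ub[of k] assms by simp
  qed
  then have "cl k - 1 < cl k" by simp
  then have "\<not> k \<le> 2^(cl k - 1)" unfolding cl_def by (rule not_less_Least)
  then show "2^(cl k - 1) < k" by simp
qed

lemma cl_eqI: assumes "1 \<le> P" "2^(P-1) < k" "k \<le> 2^P" shows "cl k = P"
proof -
  have "cl k \<le> P" using cl_le assms by blast
  moreover have "\<not> cl k \<le> P - 1"
  proof
    assume "cl k \<le> P - 1"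
    then have "(2::nat)^(cl k) \<le> 2^(P-1)" by simp
    then show False using cl_ub[of k] assms by linarith
  qed
  ultimately show ?thesis by simp
qed

lemma cl_1[simp]: "cl 1 = 0" using cl_le[of 1 0] by simp
lemma cl_Suc0[simp]: "cl (Suc 0) = 0" using cl_1 by simp

definition sig :: "nat \<Rightarrow> int" where
  "sig k = (let P = cl k; r = k - 2^(P-1) in
     if P \<le> 1 then 0 else if odd r then 2*int P - 2 - int (v2n (r+1)) else int P - 1 - int (v2n r))"

definition kap :: "nat \<Rightarrow> int" where
  "kap k = (if k = 0 then -1 else int k * int (cl k) - 2^(cl k) + sig k)"

definition LBa :: "nat \<Rightarrow> nat \<Rightarrow> int" where
  "LBa n a = (if a = 0 then 0 else if even a then int n - 1 - int (v2n a) else 2*int n - 2)"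

lemma sig_r: assumes "2 \<le> P" "2^(P-1) < k" "k \<le> 2^P"
  shows "sig k = (if odd (k - 2^(P-1)) then 2*int P - 2 - int (v2n (k - 2^(P-1) + 1))
                  else int P - 1 - int (v2n (k - 2^(P-1))))"
proof -
  have "cl k = P" using cl_eqI assms by simp
  then show ?thesis using assms(1) unfolding sig_def Let_def by simp
qed

lemma sig_small: "cl k \<le> 1 \<Longrightarrow> sig k = 0"
  unfolding sig_def Let_def by simp

lemma pow_pred: "1 \<le> q \<Longrightarrow> (2::nat)^q = 2 * 2^(q-1)"
  by (metis Suc_diff_le diff_Suc_1 power_Suc)

lemma sig_s: assumes "1 \<le> k"
  shows "sig k = (if 2^(cl k) - k = 0 then 0 else if 2^(cl k) - k = 1 then int (cl k) - 1
          else if odd (2^(cl k) - k) then 2*int (cl k) - 2 - int (v2n (2^(cl k) - k - 1))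
          else int (cl k) - 1 - int (v2n (2^(cl k) - k)))"
proof (cases "cl k \<le> 1")
  case True
  have "k \<le> 2^(cl k)" by (rule cl_ub)
  moreover have "k = 1 \<or> 2 \<le> k" using assms by linarith
  ultimately have "2^(cl k) - k = 0"
    using True cl_gt[of k] by (auto simp: le_Suc_eq)
  then show ?thesis using sig_small[OF True] by simp
next
  case False
  define q where "q = cl k"
  have q2: "2 \<le> q" using False q_def by simp
  have k2: "2 \<le> k"
  proof (rule ccontr)
    assume "\<not> 2 \<le> k" then have "k = 1" using assms by simp
    then show False using False by simp
  qed
  have lo: "2^(q-1) < k" using cl_gt[OF k2] q_def by simp
  have hi: "k \<le> 2^q" using cl_ub q_def by simp
  have pq: "(2::nat)^q = 2 * 2^(q-1)" using pow_pred q2 by simp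
  define r where "r = k - 2^(q-1)"
  define s where "s = 2^q - k"
  have rs: "r + s = 2^(q-1)" using lo hi pq r_def s_def by simp
  have r1: "1 \<le> r" using lo r_def by simp
  have ev: "even ((2::nat)^(q-1))" using q2 by simp
  have par: "odd r \<longleftrightarrow> odd s" using rs ev by (metis even_add)
  have sig_eq: "sig k = (if odd r then 2*int q - 2 - int (v2n (r+1)) else int q - 1 - int (v2n r))"
    using False q_def r_def unfolding sig_def Let_def by simp
  have slt: "s < 2^(q-1)" using rs r1 by simp
  show ?thesis
  proof -
    have "sig k = (if s = 0 then 0 else if s = 1 then int q - 1
          else if odd s then 2*int q - 2 - int (v2n (s - 1))
          else int q - 1 - int (v2n s))"
    proof (cases "s = 0")
      case True
      then have "r = 2^(q-1)" using rs by simp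
      then show ?thesis using sig_eq True ev by simp
    next
      case s0: False
      show ?thesis
      proof (cases "s = 1")
        case True
        then have "r + 1 = 2^(q-1)" using rs by simp
        moreover have "odd r" using True par by simp
        ultimately show ?thesis using sig_eq True q2 by simp
      next
        case s1: False
        show ?thesis
        proof (cases "odd s")
          case True
          then have "odd r" using par by simp
          have "r + 1 = 2^(q-1) - (s - 1)" using rs s0 by simp
          moreover have "0 < s - 1" "s - 1 < 2^(q-1)" using s0 s1 slt by auto
          ultimately have "v2n (r+1) = v2n (s-1)" using v2n_pow_minus[of "s-1" "q-1"] by simp
          then show ?thesis using sig_eq True s0 s1 \<open>odd r\<close> by simp
        next
          case False
          then have "even r" using par by simp
          have "r = 2^(q-1) - s" using rs by simp
          then have "v2n r = v2n s" using v2n_pow_minus s0 slt by simp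
          then show ?thesis using sig_eq False s0 s1 \<open>even r\<close> by simp
        qed
      qed
    qed
    then show ?thesis using q_def s_def by simp
  qed
qed

lemma sig_nonneg: "0 \<le> sig k"
proof (cases "cl k \<le> 1")
  case True then show ?thesis using sig_small by simp
next
  case False
  then have q2: "2 \<le> cl k" by simp
  then have k2: "2 \<le> k" using cl_le[of k 1] by (cases "k \<le> 1") (auto simp: le_Suc_eq)
  have lo: "2^(cl k - 1) < k" using cl_gt[OF k2] by simp
  have hi: "k \<le> 2^(cl k)" by (rule cl_ub)
  have pq: "(2::nat)^(cl k) = 2 * 2^(cl k - 1)" using pow_pred q2 by simp
  define r where "r = k - 2^(cl k - 1)"
  have r1: "1 \<le> r" "r \<le> 2^(cl k - 1)" using lo hi pq r_def by auto
  have a: "v2n r \<le> cl k - 1" using v2n_le r1 by simp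
  have b: "odd r \<Longrightarrow> v2n (r+1) \<le> cl k - 1"
  proof -
    assume "odd r"
    moreover have "even ((2::nat)^(cl k - 1))" using q2 by simp
    ultimately have "r \<noteq> 2^(cl k - 1)" by auto
    then have "r + 1 \<le> 2^(cl k - 1)" using r1 by simp
    then show ?thesis using v2n_le by simp
  qed
  show ?thesis using False a b unfolding sig_def Let_def r_def[symmetric] by auto
qed


lemma kap_diff: assumes "1 \<le> b" "b \<le> k" "cl b \<le> cl k"
  shows "kap k - kap b = int (k-b) * int (cl k) + int (b * (cl k - cl b) + 2^(cl b)) - 2^(cl k) + sig k - sig b"
proof -
  have eq: "int (b * (cl k - cl b) + 2^(cl b)) = int b * (int (cl k) - int (cl b)) + 2^(cl b)"
    by (simp only: of_nat_add of_nat_mult of_nat_diff[OF assms(3)] of_nat_power of_nat_numeral)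
  have eq2: "int (k - b) = int k - int b" using assms by simp
  show ?thesis unfolding eq eq2 using assms unfolding kap_def by (simp add: algebra_simps)
qed

lemma pow_pred_gen: "1 \<le> q \<Longrightarrow> (x::'a::monoid_mult)^q = x * x^(q-1)"
  by (cases q) auto

lemma pow_ge_succ: "d + 1 \<le> (2::nat)^d"
  using less_exp[of d] by linarith

lemma pow_ge3: "3 \<le> d \<Longrightarrow> d + 1 \<le> (2::nat)^(d-1)"
proof (induction d rule: nat_induct_at_least)
  case base then show ?case by simp
next
  case (Suc d)
  then have "(2::nat)^(Suc d - 1) = 2 * 2^(d-1)" using pow_pred[of d] by simp
  then show ?case using Suc by simp
qed

lemma G_nonneg: assumes "q \<le> P" "b \<le> 2^q" shows "b * (P - q) + 2^q \<le> (2::nat)^P"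
proof -
  have "b * (P - q) + 2^q \<le> 2^q * (P - q) + 2^q" using assms(2) by simp
  also have "\<dots> = 2^q * (P - q + 1)" by (simp add: algebra_simps)
  also have "\<dots> \<le> 2^q * 2^(P-q)" using mult_le_mono2[OF pow_ge_succ[of "P-q"], of "2^q"] by simp
  also have "\<dots> = 2^P" using assms(1) by (simp add: power_add[symmetric])
  finally show ?thesis .
qed

lemma G_big: assumes "q + 3 \<le> P" "b \<le> 2^q" shows "b * (P - q) + 2^q + 2^(P-1) \<le> (2::nat)^P"
proof -
  have "b * (P - q) + 2^q \<le> 2^q * (P - q) + 2^q" using assms(2) by simp
  also have "\<dots> = 2^q * (P - q + 1)" by (simp add: algebra_simps)
  also have "\<dots> \<le> 2^q * 2^(P-q-1)" using mult_le_mono2[OF pow_ge3[of "P-q"], of "2^q"] assms by simp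
  also have "\<dots> = 2^(P-1)" using assms(1) by (simp add: power_add[symmetric])
  finally have "b * (P - q) + 2^q \<le> 2^(P-1)" .
  moreover have "(2::nat)^P = 2 * 2^(P-1)" using pow_pred assms by simp
  ultimately show ?thesis by simp
qed

lemma v2n_even_pos: "even a \<Longrightarrow> 0 < a \<Longrightarrow> 1 \<le> v2n a"
  using v2n_dvd_iff[of a 1] by simp

lemma sig_le: assumes "2 \<le> cl k" shows "sig k \<le> 2 * int (cl k) - 3"
proof -
  have k2: "2 \<le> k" using cl_le[of k 1] assms by (cases "k \<le> 1") (auto simp: le_Suc_eq)
  define r where "r = k - 2^(cl k - 1)"
  have r1: "1 \<le> r" using cl_gt[OF k2] r_def by simp
  have "odd r \<Longrightarrow> 1 \<le> v2n (r+1)" using v2n_even_pos[of "r+1"] by simp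
  then show ?thesis using assms unfolding sig_def Let_def r_def[symmetric] by auto
qed

lemma sig_le2: "sig k \<le> 2 * int (cl k)"
  using sig_le[of k] sig_small[of k] by (cases "2 \<le> cl k") auto

lemma helper1: assumes "0 < u" "0 < a" "v2n u \<le> L" "2 \<le> a"
  shows "int (v2n u) - int (v2n (u + a)) < int a + int L - int (v2n a)"
proof -
  have t: "2 * v2n a \<le> a" by (rule v2n_twice_le)
  have "v2n u \<le> v2n (u + a) \<or> v2n (u + a) = v2n a"
  proof (cases "v2n u \<le> v2n a")
    case True
    then show ?thesis using v2n_add_ge[OF assms(1,2)] by auto
  next
    case False
    then have "v2n (a + u) = v2n a" using v2n_add_lt[OF assms(2,1)] by simp
    then show ?thesis by (simp add: add.commute)
  qed
  then show ?thesis using t assms(3,4) by auto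
qed

lemma LBa_nonneg: assumes "a \<le> 2^(n-1)" "1 \<le> n" shows "0 \<le> LBa n a"
proof (cases "a = 0")
  case False
  then have "v2n a \<le> n - 1" using v2n_le assms by simp
  then show ?thesis using assms unfolding LBa_def by auto
qed (simp add: LBa_def)

lemma K_A:
  assumes b1: "1 \<le> b" and bk: "b < k" and kM: "k \<le> 2^(n-1)" and n1: "1 \<le> n"
  shows "kap k - kap b < int n * int (k-b) + LBa n (k-b)"
proof -
  define P where "P = cl k"
  define q where "q = cl b"
  define a where "a = k - b"
  have Pn: "P \<le> n - 1" using cl_le kM P_def by simp
  have k2: "2 \<le> k" using b1 bk by simp
  have P1: "1 \<le> P" "2^(P-1) < k" "k \<le> 2^P" using cl_gt[OF k2] cl_ub[of k] P_def by auto
  have qP: "q \<le> P" using cl_le[of b P] P1 bk q_def by simp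
  have bq: "b \<le> 2^q" using cl_ub q_def by simp
  have diff: "kap k - kap b = int a * int P + int (b * (P - q) + 2^q) - 2^P + sig k - sig b"
    using kap_diff[of b k] b1 bk qP P_def q_def a_def by simp
  have Gn: "b * (P - q) + 2^q \<le> (2::nat)^P" using G_nonneg qP bq by simp
  then have Gi: "int (b * (P - q) + 2^q) \<le> 2^P" by (metis of_nat_le_iff of_nat_numeral of_nat_power)
  have a1: "1 \<le> a" using bk a_def by simp
  have sb: "0 \<le> sig b" by (rule sig_nonneg)
  have sk: "sig k \<le> 2 * int P" using sig_le2 P_def by simp
  have aP: "int a * int P \<le> int a * (int n - 1)" using Pn n1 by (intro mult_left_mono) auto
  have IP: "int (P - 1) = int P - 1" using P1 by simp
  have Pn': "int P \<le> int n - 1" using Pn n1 by simp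
  have main: "kap k - kap b < int n * int a + LBa n a"
  proof (cases "odd a")
    case True
    then have "LBa n a = 2 * int n - 2" unfolding LBa_def by auto
    then show ?thesis using diff Gi sb sk aP Pn n1 a1 a_def by (simp add: algebra_simps)
  next
    case False
    then have a2: "2 \<le> a" using a1 by (cases "a = 1") auto
    have LB: "LBa n a = int n - 1 - int (v2n a)" using False a1 unfolding LBa_def by auto
    have ta: "2 * v2n a \<le> a" by (rule v2n_twice_le)
    have base: "int a * int P + int a \<le> int a * int n" using aP by (simp add: algebra_simps)
    have P2: "2 \<le> P"
    proof (rule ccontr)
      assume "\<not> 2 \<le> P" then have "P = 1" using P1 by simp
      then have "k = 2" using P1 k2 by simp
      then show False using a2 a_def b1 by simp
    qed
    show ?thesis
    proof (cases "q = P")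
      case True
      have b2: "2 \<le> b" using True P2 q_def b1 by (cases "b = 1") auto
      have bl: "2^(P-1) < b" using cl_gt[OF b2] True q_def by simp
      define rk where "rk = k - 2^(P-1)"
      define rb where "rb = b - 2^(P-1)"
      have rr: "rk = rb + a" using bl bk rk_def rb_def a_def by simp
      have rb1: "1 \<le> rb" using bl rb_def by simp
      have rbl: "rb + 1 \<le> 2^(P-1)" using rr a2 P1 rk_def pow_pred[of P] by simp
      have sk': "sig k = (if odd rk then 2*int P - 2 - int (v2n (rk + 1)) else int P - 1 - int (v2n rk))"
        using sig_r[OF P2 P1(2) P1(3)] rk_def by simp
      have sb': "sig b = (if odd rb then 2*int P - 2 - int (v2n (rb + 1)) else int P - 1 - int (v2n rb))"
        using sig_r[OF P2 bl] True q_def cl_ub[of b] rb_def by simp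
      have par: "odd rk \<longleftrightarrow> odd rb" using rr False by simp
      have G0: "int (b * (P - q) + 2^q) - 2^P = 0" using True by simp
      show ?thesis
      proof (cases "odd rb")
        case True
        have "int (v2n (rb+1)) - int (v2n (rb + 1 + a)) < int a + int (P-1) - int (v2n a)"
          by (rule helper1) (use rb1 a1 rbl v2n_le a2 in auto)
        then show ?thesis using diff G0 sk' sb' True par rr LB base Pn IP by (simp add: algebra_simps)
      next
        case ev: False
        have "int (v2n rb) - int (v2n (rb + a)) < int a + int (P-1) - int (v2n a)"
          by (rule helper1) (use rb1 a1 rbl v2n_le a2 in auto)
        then show ?thesis using diff G0 sk' sb' ev par rr LB base Pn IP by (simp add: algebra_simps)
      qed
    next
      case qne: False
      show ?thesis
      proof (cases "q = P - 1")
        case True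
        have G1: "int (b * (P - q) + 2^q) - 2^P = int b - 2^(P-1)"
          using True P1 pow_pred_gen[of P "2::int"] by simp
        define r where "r = k - 2^(P-1)"
        define s where "s = 2^q - b"
        have ars: "a = r + s" using r_def s_def True bq P1 a_def by simp
        have r1: "1 \<le> r" using P1 r_def by simp
        have sk': "sig k = (if odd r then 2*int P - 2 - int (v2n (r + 1)) else int P - 1 - int (v2n r))"
          using sig_r[OF P2 P1(2) P1(3)] r_def by simp
        have sb': "sig b = (if s = 0 then 0 else if s = 1 then int q - 1
          else if odd s then 2*int q - 2 - int (v2n (s - 1))
          else int q - 1 - int (v2n s))" using sig_s[OF b1] q_def s_def by simp
        have par: "odd r \<longleftrightarrow> odd s" using ars False by simp
        have sbs: "int b - 2^(P-1) = - int s" using s_def bq True by simp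
        have vaP: "v2n a \<le> P" using v2n_le[of a P] a1 P1 a_def by simp
        have key: "sig k - sig b - int s < int a + int P - int (v2n a)"
        proof (cases "s = 0")
          case True
          then show ?thesis using sk' sb' par ars by simp
        next
          case s0: False
          show ?thesis
          proof (cases "s = 1")
            case True
            then show ?thesis using sk' sb' par ars \<open>q = P - 1\<close> P2 by simp
          next
            case s1: False
            have ts: "2 * v2n s \<le> s" by (rule v2n_twice_le)
            have ts1: "2 * v2n (s - 1) \<le> s - 1" by (rule v2n_twice_le)
            have vr: "odd r \<Longrightarrow> 1 \<le> v2n (r+1)" using v2n_even_pos[of "r+1"] by simp
            show ?thesis
            proof (cases "odd s")
              case True
              then show ?thesis using sk' sb' par ars \<open>q = P - 1\<close> P2 s0 s1 ts1 vr vaP ta by auto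
            next
              case False
              then show ?thesis using sk' sb' par ars \<open>q = P - 1\<close> P2 s0 s1 ts vaP ta by auto
            qed
          qed
        qed
        show ?thesis using diff G1 sbs key LB base Pn' by (simp add: algebra_simps)
      next
        case False
        then have q2: "q + 2 \<le> P" using qne qP by simp
        have "(2::nat)^q \<le> 2^(P-2)" using q2 by simp
        then have bP: "b \<le> 2^(P-2)" using bq by linarith
        have pp: "(2::nat)^(P-1) = 2 * 2^(P-2)" using pow_pred_gen[of "P-1" "2::nat"] P2 by simp
        have ab: "2^(P-2) + 1 \<le> a" using bP P1 pp a_def by simp
        have tw: "2 * (P - 2) \<le> (2::nat)^(P-2)" by (rule two_mult_le_pow)
        have sk2: "sig k \<le> 2 * int P - 3" using sig_le P2 P_def by simp
        have "int (2 * P) \<le> int a + 3" using ab tw P2 by simp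
        then show ?thesis using diff Gi sb sk2 LB base Pn ta by (simp add: algebra_simps)
      qed
    qed
  qed
  then show ?thesis using a_def by simp
qed


lemma K_B:
  assumes n3: "3 \<le> n" and kl: "2^(n-1) < k" and ku: "k \<le> 2^n" and bM: "b \<le> 2^(n-1)"
    and aM: "k - b \<le> 2^(n-1)"
    and nd: "b \<noteq> (if odd (k - 2^(n-1)) then 2^(n-1) - 1 else 2^(n-1))"
  shows "kap k - kap b < int n * int (k-b) + LBa n (k-b)"
proof -
  define M where "M = (2::nat)^(n-1)"
  define r where "r = k - M"
  define a where "a = k - b"
  define q where "q = cl b"
  have pN: "(2::nat)^n = 2 * M" using pow_pred_gen[of n "2::nat"] n3 M_def by simp
  have pNi: "(2::int)^n = 2 * int M" using pN by (metis of_nat_mult of_nat_numeral of_nat_power)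
  have Pn: "cl k = n" using cl_eqI[of n k] n3 kl ku by simp
  have r1: "1 \<le> r" and rM: "r \<le> M" using kl ku pN r_def M_def by auto
  have br: "r \<le> b" using aM r_def M_def by simp
  have b1: "1 \<le> b" using br r1 by simp
  have bk: "b < k" using bM kl M_def by simp
  have qn: "q \<le> n - 1" using cl_le bM q_def by simp
  have bq: "b \<le> 2^q" using cl_ub q_def by simp
  have diff: "kap k - kap b = int a * int n + int (b * (n - q) + 2^q) - 2^n + sig k - sig b"
    using kap_diff[of b k] b1 bk qn Pn q_def a_def by simp
  have Gn: "b * (n - q) + 2^q \<le> (2::nat)^n" using G_nonneg[of q n b] qn bq by simp
  then have Gi: "int (b * (n - q) + 2^q) \<le> 2^n" by (metis of_nat_le_iff of_nat_numeral of_nat_power)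
  have n2: "2 \<le> n" using n3 by simp
  have sk: "sig k = (if odd r then 2*int n - 2 - int (v2n (r + 1)) else int n - 1 - int (v2n r))"
    using sig_r[OF n2 kl ku] r_def M_def by simp
  have sk2: "sig k \<le> 2 * int n - 3" using sig_le[of k] Pn n2 by simp
  have sb: "0 \<le> sig b" by (rule sig_nonneg)
  have a1: "1 \<le> a" using bk a_def by simp
  have aMM: "a \<le> M" using aM a_def M_def by simp
  have vr: "odd r \<Longrightarrow> 1 \<le> v2n (r+1)" using v2n_even_pos[of "r+1"] by simp
  have vr2: "\<not> odd r \<Longrightarrow> 1 \<le> v2n r" using v2n_even_pos[of r] r1 by simp
  have Mev: "even M" using n3 M_def by simp
  have main: "int (b * (n - q) + 2^q) - 2^n + sig k - sig b < LBa n a"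
  proof (cases "odd a")
    case True
    then have "LBa n a = 2 * int n - 2" unfolding LBa_def by auto
    then show ?thesis using Gi sk2 sb by simp
  next
    case False
    have LB0: "0 \<le> LBa n a" using LBa_nonneg[of a n] aMM n3 M_def by simp
    have neg: "int (b * (n - q) + 2^q) - 2^n + sig k - sig b < 0"
    proof (cases "q = n - 1")
      case True
      define s where "s = 2^q - b"
      have sM: "int (b * (n - q) + 2^q) - 2^n = - int s"
        using True pNi bq s_def M_def n3 by simp
      have sb': "sig b = (if s = 0 then 0 else if s = 1 then int q - 1
          else if odd s then 2*int q - 2 - int (v2n (s - 1))
          else int q - 1 - int (v2n s))" using sig_s[OF b1] q_def s_def by simp
      have ars: "a = r + s" using a_def r_def s_def True M_def bq bk kl by simp
      have par: "odd r \<longleftrightarrow> odd s" using ars False by simp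
      have ts: "2 * v2n s \<le> s" by (rule v2n_twice_le)
      have ts1: "2 * v2n (s - 1) \<le> s - 1" by (rule v2n_twice_le)
      have bs: "b = M - s" using s_def True M_def bq by simp
      show ?thesis
      proof (cases "odd r")
        case True
        then have s1: "s \<noteq> 1" using nd bs r_def M_def by auto
        have "odd s" using True par by simp
        then have s3: "3 \<le> s" using s1 by (cases "s = 0 \<or> s = 1 \<or> s = 2") auto
        then show ?thesis using sM sb' sk True \<open>odd s\<close> s1 ts1 vr \<open>q = n - 1\<close> n3 by auto
      next
        case ev: False
        then have s0: "s \<noteq> 0" using nd bs r_def M_def by auto
        have "even s" using ev par by simp
        then have s2: "2 \<le> s" using s0 by (cases "s = 1") auto
        then show ?thesis using sM sb' sk ev \<open>even s\<close> s0 ts vr2 \<open>q = n - 1\<close> n3 by auto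
      qed
    next
      case qne: False
      show ?thesis
      proof (cases "q = n - 2")
        case True
        have p4: "(2::nat)^n = 4 * 2^(n-2)" using pN pow_pred_gen[of "n-1" "2::nat"] n3 M_def by simp
        have tw0: "2 * (n - 2) \<le> (2::nat)^(n-2)" by (rule two_mult_le_pow)
        have "int (2 * (n - 2)) \<le> int ((2::nat)^(n-2))" using tw0 by (simp only: of_nat_le_iff)
        then have tw: "2 * int n - 4 \<le> (2::int)^(n-2)" using n3 by simp
        have nq: "n - q = 2" using True n3 by simp
        have parb: "odd r \<longleftrightarrow> odd b"
        proof -
          have "a + b = r + M" using a_def r_def bk kl M_def by simp
          then show ?thesis using False Mev by (metis even_add)
        qed
        show ?thesis
        proof (cases "odd r")
          case True
          then have "odd b" using parb by simp
          moreover have "even ((2::nat)^(n-2))" using n3 by simp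
          ultimately have "b \<noteq> 2^(n-2)" by auto
          then have bl: "b + 1 \<le> 2^(n-2)" using bq \<open>q = n - 2\<close> by simp
          have e: "int (b * (n - q) + 2^q) = 2 * int b + 2^(n-2)" using nq \<open>q = n - 2\<close> by simp
          have p4i: "(2::int)^n = 4 * 2^(n-2)" using p4 by (metis of_nat_mult of_nat_numeral of_nat_power)
          have bl': "int b + 1 \<le> 2^(n-2)" using bl by (metis of_nat_Suc of_nat_le_iff of_nat_numeral of_nat_power Suc_eq_plus1 add.commute)
          have "int (b * (n - q) + 2^q) - 2^n \<le> - int (2^(n-2)) - 2"
            using e p4i bl' by simp
          then show ?thesis using sk2 sb tw n3 by simp
        next
          case ev: False
          have "sig k \<le> int n - 2" using sk ev vr2 by simp
          moreover have "int (b * (n - q) + 2^q) - 2^n \<le> - int (2^(n-2))"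
          proof -
            have e: "int (b * (n - q) + 2^q) = 2 * int b + 2^(n-2)" using nq \<open>q = n - 2\<close> by simp
            have p4i: "(2::int)^n = 4 * 2^(n-2)" using p4 by (metis of_nat_mult of_nat_numeral of_nat_power)
            have bl': "int b \<le> 2^(n-2)" using bq \<open>q = n - 2\<close> by (metis of_nat_le_iff of_nat_numeral of_nat_power)
            show ?thesis using e p4i bl' by simp
          qed
          ultimately show ?thesis using sb tw n3 by simp
        qed
      next
        case False
        then have q3: "q + 3 \<le> n" using qne qn n3 by simp
        have "b * (n - q) + 2^q + 2^(n-1) \<le> (2::nat)^n" using G_big[OF q3 bq] by simp
        then have "b * (n - q) + 2^q \<le> M" using pN M_def by simp
        then have "int (b * (n - q) + 2^q) \<le> int M" by (simp only: of_nat_le_iff)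
        then have "int (b * (n - q) + 2^q) - 2^n \<le> - int M" using pNi by linarith
        moreover have "2 * (n - 1) \<le> M" using two_mult_le_pow M_def by simp
        ultimately show ?thesis using sk2 sb n3 by simp
      qed
    qed
    show ?thesis using neg LB0 by simp
  qed
  show ?thesis using diff main a_def by (simp add: algebra_simps)
qed

lemma K_eq:
  assumes n3: "3 \<le> n" and kl: "2^(n-1) < k" and ku: "k \<le> 2^n"
    and bd: "b = (if odd (k - 2^(n-1)) then 2^(n-1) - 1 else 2^(n-1))"
  shows "kap k - kap b = int n * int (k-b) + LBa n (k-b)"
proof -
  define M where "M = (2::nat)^(n-1)"
  define r where "r = k - M"
  have pN: "(2::nat)^n = 2 * M" using pow_pred_gen[of n "2::nat"] n3 M_def by simp
  have pNi: "(2::int)^n = 2 * int M" using pN by (metis of_nat_mult of_nat_numeral of_nat_power)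
  have pM: "M = 2 * 2^(n-2)" using pow_pred_gen[of "n-1" "2::nat"] n3 M_def by simp
  have Pn: "cl k = n" using cl_eqI[of n k] n3 kl ku by simp
  have r1: "1 \<le> r" and rM: "r \<le> M" using kl ku pN r_def M_def by auto
  have n2: "2 \<le> n" using n3 by simp
  have sk: "sig k = (if odd r then 2*int n - 2 - int (v2n (r + 1)) else int n - 1 - int (v2n r))"
    using sig_r[OF n2 kl ku] r_def M_def by simp
  have g2: "2 \<le> (2::nat)^(n-2)"
  proof -
    have "(2::nat)^1 \<le> 2^(n-2)" by (rule power_increasing) (use n3 in auto)
    then show ?thesis by simp
  qed
  show ?thesis
  proof (cases "odd r")
    case True
    then have b: "b = M - 1" using bd r_def M_def by simp
    have nn: "n - 1 - 1 = n - 2" by simp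
    have clb: "cl b = n - 1"
    proof (rule cl_eqI)
      show "1 \<le> n - 1" using n3 by simp
      show "2^(n-1-1) < b" unfolding nn using b pM g2 by simp
      show "b \<le> 2^(n-1)" using b M_def by simp
    qed
    have b1: "1 \<le> b" using b pM g2 by simp
    have bk: "b \<le> k" using b kl M_def by simp
    have s1: "2^(cl b) - b = 1" using clb b M_def pM g2 by simp
    have "sig b = int (cl b) - 1" using sig_s[OF b1] s1 by simp
    then have sb: "sig b = int (n-1) - 1" using clb by simp
    have diff: "kap k - kap b = int (k-b) * int n + int (b * (n - (n-1)) + 2^(n-1)) - 2^n + sig k - sig b"
      using kap_diff[OF b1 bk] Pn clb by simp
    have a: "k - b = r + 1" using b r_def kl M_def by (simp add: Suc_diff_le less_imp_le)
    have ev: "even (k - b)" using a True by simp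
    have LB: "LBa n (k - b) = int n - 1 - int (v2n (r + 1))" using a ev unfolding LBa_def by simp
    show ?thesis using diff sb sk True LB a b pNi M_def n3 g2 pM by (simp add: algebra_simps)
  next
    case False
    then have b: "b = M" using bd r_def M_def by simp
    have nn: "n - 1 - 1 = n - 2" by simp
    have clb: "cl b = n - 1"
    proof (rule cl_eqI)
      show "1 \<le> n - 1" using n3 by simp
      show "2^(n-1-1) < b" unfolding nn using b pM g2 by simp
      show "b \<le> 2^(n-1)" using b M_def by simp
    qed
    have b1: "1 \<le> b" using b pM g2 by simp
    have bk: "b \<le> k" using b kl M_def by simp
    have s0: "2^(cl b) - b = 0" using clb b M_def by simp
    have sb: "sig b = 0" using sig_s[OF b1] s0 by simp
    have diff: "kap k - kap b = int (k-b) * int n + int (b * (n - (n-1)) + 2^(n-1)) - 2^n + sig k - sig b"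
      using kap_diff[OF b1 bk] Pn clb by simp
    have a: "k - b = r" using b r_def by simp
    have LB: "LBa n (k - b) = int n - 1 - int (v2n r)" using a False r1 unfolding LBa_def by simp
    show ?thesis using diff sb sk False LB a b pNi M_def n3 by (simp add: algebra_simps)
  qed
qed


definition ex2 :: "int \<Rightarrow> int \<Rightarrow> bool" where
  "ex2 x e \<longleftrightarrow> (\<exists>u. odd u \<and> 0 \<le> e \<and> x = 2^nat e * u)"

definition lb2 :: "int \<Rightarrow> int \<Rightarrow> bool" where
  "lb2 x e \<longleftrightarrow> (e \<le> 0 \<or> 2^nat e dvd x)"

lemma ex2_nonneg: "ex2 x e \<Longrightarrow> 0 \<le> e" unfolding ex2_def by auto

lemma ex2_mult: "ex2 x e \<Longrightarrow> ex2 y d \<Longrightarrow> ex2 (x*y) (e+d)"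
  unfolding ex2_def
proof (elim exE conjE)
  fix u v assume "odd u" "0 \<le> e" "x = 2^nat e * u" "odd v" "0 \<le> d" "y = 2^nat d * v"
  then show "\<exists>w. odd w \<and> 0 \<le> e + d \<and> x * y = 2^nat (e+d) * w"
    by (intro exI[of _ "u*v"]) (simp add: nat_add_distrib power_add algebra_simps)
qed

lemma lb2_mult: "lb2 x e \<Longrightarrow> lb2 y d \<Longrightarrow> 0 \<le> e \<Longrightarrow> 0 \<le> d \<Longrightarrow> lb2 (x*y) (e+d)"
  unfolding lb2_def
proof -
  assume h: "e \<le> 0 \<or> 2 ^ nat e dvd x" "d \<le> 0 \<or> 2 ^ nat d dvd y" "0 \<le> e" "0 \<le> d"
  have "(2::int)^nat e dvd x" using h by (cases "e = 0") auto
  moreover have "(2::int)^nat d dvd y" using h by (cases "d = 0") auto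
  ultimately have "(2::int)^nat e * 2^nat d dvd x * y" by (rule mult_dvd_mono)
  then show "e + d \<le> 0 \<or> 2 ^ nat (e + d) dvd x * y" using h by (simp add: nat_add_distrib power_add)
qed

lemma ex2_lb2: "ex2 x e \<Longrightarrow> lb2 x e"
  unfolding ex2_def lb2_def by auto

lemma lb2_mono: "lb2 x e \<Longrightarrow> d \<le> e \<Longrightarrow> lb2 x d"
  unfolding lb2_def
proof -
  assume h: "e \<le> 0 \<or> 2 ^ nat e dvd x" "d \<le> e"
  show "d \<le> 0 \<or> 2 ^ nat d dvd x"
  proof (cases "d \<le> 0")
    case False
    then have "(2::int)^nat d dvd 2^nat e" using h by (intro le_imp_power_dvd) auto
    then show ?thesis using h False dvd_trans by auto
  qed simp
qed

lemma lb2_0[simp]: "lb2 0 e" unfolding lb2_def by simp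
lemma lb2_triv: "e \<le> 0 \<Longrightarrow> lb2 x e" unfolding lb2_def by simp
lemma ex2_pow2: "ex2 (2^m) (int m)" unfolding ex2_def by (intro exI[of _ 1]) simp
lemma ex2_odd: "odd x \<Longrightarrow> ex2 x 0" unfolding ex2_def by (intro exI[of _ x]) simp
lemma lb2_pow_mult: "lb2 (2^m * x) (int m)" unfolding lb2_def by simp

lemma lb2_nat: "lb2 (int l) (int (v2n l))"
proof -
  have "2^(v2n l) dvd l" by (rule v2n_dvd)
  then have "int (2^(v2n l)) dvd int l" by (simp only: of_nat_dvd_iff)
  then show ?thesis unfolding lb2_def by simp
qed

lemma ex2_add: "ex2 x e \<Longrightarrow> lb2 y (e+1) \<Longrightarrow> ex2 (x+y) e"
proof -
  assume a: "ex2 x e" "lb2 y (e+1)"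
  obtain u where u: "odd u" "0 \<le> e" "x = 2^nat e * u" using a(1) unfolding ex2_def by blast
  have "(2::int)^nat (e+1) dvd y" using a(2) u(2) unfolding lb2_def by auto
  then obtain w where w: "y = 2^nat (e+1) * w" by blast
  have "x + y = 2^nat e * (u + 2*w)" using u w by (simp add: nat_add_distrib power_add algebra_simps)
  moreover have "odd (u + 2*w)" using u by simp
  ultimately show ?thesis using u unfolding ex2_def by blast
qed

lemma lb2_add: "lb2 x e \<Longrightarrow> lb2 y e \<Longrightarrow> lb2 (x+y) e"
  unfolding lb2_def by auto

lemma lb2_sum: "(\<And>i. i \<in> A \<Longrightarrow> lb2 (g i) e) \<Longrightarrow> lb2 (sum g A) e"
proof (induction A rule: infinite_finite_induct)
  case (insert x F) then show ?case by (simp add: lb2_add)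
qed auto

lemma ex2_sum: assumes "finite A" "i0 \<in> A" "ex2 (g i0) e" "\<And>i. i \<in> A \<Longrightarrow> i \<noteq> i0 \<Longrightarrow> lb2 (g i) (e+1)"
  shows "ex2 (sum g A) e"
proof -
  have "sum g A = g i0 + sum g (A - {i0})" using assms(1,2) by (simp add: sum.remove)
  moreover have "lb2 (sum g (A - {i0})) (e+1)" using assms(4) by (intro lb2_sum) auto
  ultimately show ?thesis using ex2_add assms(3) by simp
qed

lemma ex2_cong: assumes "ex2 y e" "(2::int)^m dvd (x - y)" "e < int m" shows "ex2 x e"
proof -
  have "lb2 (x - y) (int m)" unfolding lb2_def using assms(2) by simp
  then have "lb2 (x - y) (e+1)" by (rule lb2_mono) (use assms(3) in simp)
  then have "ex2 (y + (x - y)) e" using ex2_add assms(1) by blast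
  then show ?thesis by simp
qed

lemma ex2_not_dvd: "ex2 x e \<Longrightarrow> \<not> 2^(Suc (nat e)) dvd x"
proof
  assume a: "ex2 x e" "2^(Suc (nat e)) dvd x"
  obtain u where u: "odd u" "0 \<le> e" "x = 2^nat e * u" using a(1) unfolding ex2_def by blast
  have "(2::int)^nat e * 2 dvd 2^nat e * u" using a(2) u by (simp add: mult.commute)
  then have "2 dvd u" using dvd_mult_cancel_left[of "(2::int)^nat e" 2 u] by simp
  with u(1) show False by simp
qed

lemma ex2_dvd: "ex2 x e \<Longrightarrow> 2^(nat e) dvd x"
  unfolding ex2_def by auto

lemma ex2_mult_pow: "ex2 x e \<Longrightarrow> ex2 (2^m * x) (int m + e)"
  using ex2_mult[OF ex2_pow2] by simp

lemma lin_mult_coeff: "coeff ((p::'a::comm_ring_1 poly) * [:a, 1:]) k = a * coeff p k + (if k = 0 then 0 else coeff p (k - 1))"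
proof -
  have "p * [:a, 1:] = smult a p + pCons 0 p"
    by (simp add: mult_pCons_right smult_1_left)
  then show ?thesis by (cases k) auto
qed

lemma prod_lin_top: "coeff (\<Prod>i<m. [:c i, 1:]) m = 1 \<and> (\<forall>k>m. coeff (\<Prod>i<m. [:c i, 1::'a::comm_ring_1:]) k = 0)"
proof (induction m)
  case 0 then show ?case by (simp add: coeff_1)
next
  case (Suc m)
  show ?case
  proof
    show "coeff (\<Prod>i<Suc m. [:c i, 1:]) (Suc m) = 1" using Suc by (simp add: lin_mult_coeff)
    show "\<forall>k>Suc m. coeff (\<Prod>i<Suc m. [:c i, 1:]) k = 0"
    proof (intro allI impI)
      fix k assume k: "Suc m < k"
      have "coeff (\<Prod>i<Suc m. [:c i, 1:]) k = c m * coeff (\<Prod>i<m. [:c i, 1:]) k + coeff (\<Prod>i<m. [:c i, 1:]) (k - 1)"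
        using k by (simp only: prod.lessThan_Suc lin_mult_coeff) simp
      then show "coeff (\<Prod>i<Suc m. [:c i, 1:]) k = 0" using Suc k by simp
    qed
  qed
qed

lemma prod_lin_scale: "coeff (\<Prod>i<m. [:d * c i, 1::'a::comm_ring_1:]) k = d^(m - k) * coeff (\<Prod>i<m. [:c i, 1:]) k"
proof (induction m arbitrary: k)
  case 0 then show ?case by (cases k) (auto simp: coeff_1)
next
  case (Suc m)
  define Q where "Q = (\<Prod>i<m. [:d * c i, 1::'a:])"
  define P where "P = (\<Prod>i<m. [:c i, 1::'a:])"
  have z: "\<And>k. k > m \<Longrightarrow> coeff P k = 0" using prod_lin_top[where m=m and c=c] P_def by auto
  have IH: "\<And>k. coeff Q k = d^(m-k) * coeff P k" using Suc Q_def P_def by simp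
  have e1: "coeff (\<Prod>i<Suc m. [:d * c i, 1:]) k = d * c m * coeff Q k + (if k = 0 then 0 else coeff Q (k - 1))"
    unfolding Q_def by (simp only: prod.lessThan_Suc lin_mult_coeff)
  have e2: "coeff (\<Prod>i<Suc m. [:c i, 1:]) k = c m * coeff P k + (if k = 0 then 0 else coeff P (k - 1))"
    unfolding P_def by (simp only: prod.lessThan_Suc lin_mult_coeff)
  show ?case
  proof (cases "k = 0")
    case True then show ?thesis using e1 e2 IH by (simp add: algebra_simps)
  next
    case False
    show ?thesis
    proof (cases "k \<le> m")
      case True
      have "Suc m - k = Suc (m - k)" using True by simp
      moreover have "m - (k - 1) = Suc (m - k)" using True False by simp
      ultimately show ?thesis using e1 e2 IH False by (simp add: algebra_simps)
    next
      case gt: False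
      then have "coeff P k = 0" using z by simp
      moreover have "m - (k - 1) = 0" "Suc m - k = 0" using gt by auto
      ultimately show ?thesis using e1 e2 IH False by (simp add: algebra_simps)
    qed
  qed
qed

lemma prod_double: "(\<Prod>i<2*(m::nat). (g i :: 'a::comm_monoid_mult)) = (\<Prod>i<m. g (2*i) * g (2*i+1))"
  by (induction m) (simp_all add: mult.assoc)

lemma prod_pair: "(\<Prod>i<2*(K::nat). (g i :: 'a::comm_monoid_mult)) = (\<Prod>i<K. g i * g (2*K - 1 - i))"
proof -
  have un: "{..<2*K} = {..<K} \<union> {K..<2*K}" by auto
  have "(\<Prod>i<2*K. g i) = (\<Prod>i<K. g i) * (\<Prod>i\<in>{K..<2*K}. g i)"
    by (subst un, rule prod.union_disjoint) auto
  moreover have "(\<Prod>i\<in>{K..<2*K}. g i) = (\<Prod>i<K. g (2*K - 1 - i))"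
  proof (rule prod.reindex_bij_witness[of _ "\<lambda>i. 2*K - 1 - i" "\<lambda>i. 2*K - 1 - i"])
  qed auto
  ultimately show ?thesis by (simp add: prod.distrib)
qed

lemma sum_sym: "(\<Sum>i\<le>(m::nat). g i) = (\<Sum>i\<in>{i. 2*i < m}. g i + g (m - i)) + (if even m then g (m div 2) else 0)"
proof -
  define L where "L = {i. 2*i < m}"
  define R where "R = {i. i \<le> m \<and> m < 2*i}"
  define C where "C = {i. 2*i = m}"
  have fin: "finite L" "finite R" "finite C" unfolding L_def R_def C_def
    by (auto intro: finite_subset[of _ "{..m}"])
  have un: "{..m} = L \<union> (R \<union> C)" unfolding L_def R_def C_def by auto
  have d1: "L \<inter> (R \<union> C) = {}" "R \<inter> C = {}" unfolding L_def R_def C_def by auto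
  have "(\<Sum>i\<le>m. g i) = sum g L + (sum g R + sum g C)"
    by (subst un, subst sum.union_disjoint, use fin d1 in auto, subst sum.union_disjoint) (use fin d1 in auto)
  moreover have "sum g R = (\<Sum>i\<in>L. g (m - i))"
    by (rule sum.reindex_bij_witness[of _ "\<lambda>i. m - i" "\<lambda>i. m - i"]) (auto simp: L_def R_def)
  moreover have "sum g C = (if even m then g (m div 2) else 0)"
  proof (cases "even m")
    case True then have "C = {m div 2}" unfolding C_def by auto
    then show ?thesis using True by simp
  next
    case False then have "C = {}" unfolding C_def by auto
    then show ?thesis using False by simp
  qed
  ultimately show ?thesis unfolding L_def by (simp add: sum.distrib add.assoc)
qed


lemma prod_lin_coeff0: "coeff (\<Prod>i<m. [:c i, 1::'a::comm_ring_1:]) 0 = (\<Prod>i<m. c i)"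
  by (simp add: poly_0_coeff_0[symmetric] poly_prod)

definition pc :: "int \<Rightarrow> int poly \<Rightarrow> int poly \<Rightarrow> bool" where
  "pc m p q \<longleftrightarrow> (\<forall>k. m dvd coeff p k - coeff q k)"

lemma pc_mult: assumes "pc m p1 q1" "pc m p2 q2" shows "pc m (p1 * p2) (q1 * q2)"
  unfolding pc_def
proof
  fix k
  have "coeff (p1 * p2) k - coeff (q1 * q2) k =
        (\<Sum>i\<le>k. coeff p1 i * (coeff p2 (k-i) - coeff q2 (k-i)) + (coeff p1 i - coeff q1 i) * coeff q2 (k-i))"
    by (simp add: coeff_mult sum_subtractf[symmetric] algebra_simps)
  moreover have "m dvd (\<Sum>i\<le>k. coeff p1 i * (coeff p2 (k-i) - coeff q2 (k-i)) + (coeff p1 i - coeff q1 i) * coeff q2 (k-i))"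
    using assms unfolding pc_def by (intro dvd_sum dvd_add dvd_mult dvd_mult2) auto
  ultimately show "m dvd coeff (p1 * p2) k - coeff (q1 * q2) k" by simp
qed

lemma pc_refl: "pc m p p" unfolding pc_def by simp

lemma pc_prod: "(\<And>i. i \<in> A \<Longrightarrow> pc m (f i) (g i)) \<Longrightarrow> pc m (prod f A) (prod g A)"
proof (induction A rule: infinite_finite_induct)
  case (insert x F) then show ?case by (simp add: pc_mult)
qed (auto simp: pc_refl)

lemma pc_lin: "m dvd a - b \<Longrightarrow> pc m [:a, 1:] [:b, 1:]"
  unfolding pc_def by (auto simp: coeff_pCons split: nat.split)

definition T :: "nat \<Rightarrow> int poly" where
  "T n = (\<Prod>i<2^(n-2). [:int ((2*i+1) * (2^n - (2*i+1))), 1:])"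

lemma T_top: "coeff (T n) (2^(n-2)) = 1" "l > 2^(n-2) \<Longrightarrow> coeff (T n) l = 0"
  using prod_lin_top[where m="2^(n-2)" and c="\<lambda>i. int ((2*i+1) * (2^n - (2*i+1)))"]
  unfolding T_def by auto

lemma T_0: assumes "2 \<le> n" shows "odd (coeff (T n) 0)"
proof -
  have "coeff (T n) 0 = (\<Prod>i<2^(n-2). int ((2*i+1) * (2^n - (2*i+1))))"
    unfolding T_def by (rule prod_lin_coeff0)
  moreover have "odd (int ((2*i+1) * (2^n - (2*i+1))))" if "i < 2^(n-2)" for i
  proof -
    have nn: "n = (n-2)+2" using assms by simp
    have "(2::nat)^n = 2^(n-2) * 2^2" by (metis nn power_add)
    then have "(2::nat)^n = 2^(n-2) * 4" by simp
    then have "2*i+1 < 2^n" using that by simp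
    moreover have "even ((2::nat)^n)" using assms by simp
    ultimately have "odd (2^n - (2*i+1::nat))" by simp
    then show ?thesis by simp
  qed
  ultimately show ?thesis by (simp add: even_prod_iff)
qed

lemma sq_val:
  fixes t :: "nat \<Rightarrow> int"
  assumes nn: "2 \<le> nn" and K: "K = 2^(nn-2)"
    and t0: "odd (t 0)"
    and tv: "\<And>i. 1 \<le> i \<Longrightarrow> i \<le> K \<Longrightarrow> ex2 (t i) (int nn - 2 - int (v2n i))"
    and tz: "\<And>i. K < i \<Longrightarrow> t i = 0"
    and m: "1 \<le> m" "m \<le> 2*K"
  shows "ex2 (\<Sum>i\<le>m. t i * t (m - i)) (int nn - 1 - int (v2n m))"
proof -
  define e where "e = int nn - 1 - int (v2n m)"
  define L where "L = {i. 2*i < m}"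
  have finL: "finite L" unfolding L_def by (rule finite_subset[of _ "{..m}"]) auto
  have K1: "1 \<le> K" using K by simp
  have K2: "2 * K = 2^(nn-1)" using K pow_pred_gen[of "nn-1" "2::nat"] nn by simp
  have vK: "v2n K = nn - 2" using K by simp
  have vm: "v2n m \<le> nn - 1" using v2n_le[of m "nn-1"] m K2 by simp
  have ss: "(\<Sum>i\<le>m. t i * t (m - i)) = (\<Sum>i\<in>L. 2 * t i * t (m - i)) + (if even m then t (m div 2) * t (m div 2) else 0)"
  proof -
    have "(\<Sum>i\<le>m. t i * t (m - i)) = (\<Sum>i\<in>L. t i * t (m - i) + t (m - i) * t (m - (m - i))) +
          (if even m then t (m div 2) * t (m - m div 2) else 0)"
      unfolding L_def by (rule sum_sym)
    moreover have "(\<Sum>i\<in>L. t i * t (m - i) + t (m - i) * t (m - (m - i))) = (\<Sum>i\<in>L. 2 * t i * t (m - i))"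
      by (rule sum.cong) (auto simp: L_def)
    moreover have "even m \<Longrightarrow> m - m div 2 = m div 2" by auto
    ultimately show ?thesis by simp
  qed
  have tvi: "\<And>i. 1 \<le> i \<Longrightarrow> i < K \<Longrightarrow> v2n i \<le> nn - 3"
  proof -
    fix i assume "1 \<le> i" "i < K"
    then have "v2n i < nn - 2" using v2n_lt[of i "nn-2"] K by simp
    then show "v2n i \<le> nn - 3" by simp
  qed
  have nondom: "lb2 (2 * t i * t (m - i)) (e + 1)" if iL: "i \<in> L" and small: "m - i < K" and i1: "1 \<le> i" for i
  proof -
    have i2: "i < m - i" using iL unfolding L_def by simp
    have nn3: "3 \<le> nn"
    proof (rule ccontr)
      assume "\<not> 3 \<le> nn" then have "nn = 2" using nn by simp
      then have "K = 1" using K by simp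
      then show False using i1 i2 small by simp
    qed
    have a1: "ex2 (t i) (int nn - 2 - int (v2n i))" using tv i1 i2 small by simp
    have a2: "ex2 (t (m-i)) (int nn - 2 - int (v2n (m-i)))" using tv i2 small by simp
    have "ex2 (2 * t i * t (m - i)) (1 + (int nn - 2 - int (v2n i)) + (int nn - 2 - int (v2n (m-i))))"
      using ex2_mult[OF ex2_mult[OF ex2_pow2[of 1] a1] a2] by simp
    moreover have "e + 1 \<le> 1 + (int nn - 2 - int (v2n i)) + (int nn - 2 - int (v2n (m-i)))"
    proof -
      have vi: "v2n i \<le> nn - 3" using tvi i1 i2 small by simp
      have vmi: "v2n (m-i) \<le> nn - 3" using tvi i2 small by simp
      have mi: "m = i + (m - i)" using i2 by simp
      have "int (v2n i) + int (v2n (m-i)) \<le> int nn - 3 + int (v2n m)"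
      proof (cases "v2n i < v2n (m-i)")
        case True
        then have "v2n m = v2n i" using v2n_add_lt[of i "m-i"] i1 i2 mi by simp
        then show ?thesis using vmi nn3 by simp
      next
        case False
        show ?thesis
        proof (cases "v2n (m-i) < v2n i")
          case True
          then have "v2n m = v2n (m-i)" using v2n_add_lt[of "m-i" i] i1 i2 mi by (simp add: add.commute)
          then show ?thesis using vi nn3 by simp
        next
          case False
          then have "v2n i = v2n (m-i)" using \<open>\<not> v2n i < v2n (m-i)\<close> by simp
          then have "v2n i < v2n m" using v2n_add_eq[of i "m-i"] i1 i2 mi by simp
          then show ?thesis using vi \<open>v2n i = v2n (m-i)\<close> nn3 by simp
        qed
      qed
      then show ?thesis unfolding e_def by simp
    qed
    ultimately show ?thesis using ex2_lb2 lb2_mono by blast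
  qed
  show ?thesis
  proof (cases "m = 2*K")
    case True
    have z: "(\<Sum>i\<in>L. 2 * t i * t (m - i)) = 0"
    proof (rule sum.neutral)
      show "\<forall>i\<in>L. 2 * t i * t (m - i) = 0"
        using True tz unfolding L_def by auto
    qed
    have "ex2 (t K * t K) 0"
    proof -
      have "ex2 (t K) 0" using tv[of K] K1 vK nn by simp
      then show ?thesis using ex2_mult by fastforce
    qed
    moreover have "e = 0" unfolding e_def using True K2 nn by simp
    moreover have "m div 2 = K" using True by simp
    ultimately show ?thesis using ss z True unfolding e_def by simp
  next
    case False
    then have m2: "m < 2 * K" using m by simp
    have vm2: "v2n m \<le> nn - 2" using v2n_lt[of m "nn-1"] m m2 K2 by simp
    have mid: "lb2 (if even m then t (m div 2) * t (m div 2) else 0) (e + 1)"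
    proof (cases "even m \<and> m div 2 \<le> K")
      case True
      then have h1: "1 \<le> m div 2" using m by auto
      have ex: "ex2 (t (m div 2)) (int nn - 2 - int (v2n (m div 2)))" using tv h1 True by simp
      have vv: "v2n m = Suc (v2n (m div 2))" using v2n_double[of "m div 2"] True h1 by simp
      have a: "ex2 (t (m div 2) * t (m div 2)) (2 * (int nn - 2 - int (v2n (m div 2))))"
        using ex2_mult[OF ex ex] by (simp add: algebra_simps)
      have b: "e + 1 \<le> 2 * (int nn - 2 - int (v2n (m div 2)))" unfolding e_def using vv vm2 nn by simp
      have "lb2 (t (m div 2) * t (m div 2)) (e + 1)" by (rule lb2_mono[OF ex2_lb2[OF a] b])
      then show ?thesis using True by simp
    next
      case False
      then show ?thesis using tz by auto
    qed
    define i0 where "i0 = (if m \<le> K then 0 else m - K)"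
    have i0L: "i0 \<in> L" unfolding i0_def L_def using m2 m by auto
    have dom: "ex2 (2 * t i0 * t (m - i0)) e"
    proof (cases "m \<le> K")
      case True
      have "ex2 (t 0) 0" using t0 ex2_odd by simp
      moreover have "ex2 (t m) (int nn - 2 - int (v2n m))" using tv m True by simp
      ultimately have "ex2 (2 * t 0 * t m) (1 + 0 + (int nn - 2 - int (v2n m)))"
        using ex2_mult[OF ex2_mult[OF ex2_pow2[of 1]]] by fastforce
      then show ?thesis using True unfolding i0_def e_def by (simp add: algebra_simps)
    next
      case False
      have mk: "1 \<le> m - K" "m - K < K" using False m2 by auto
      have "ex2 (t (m - K)) (int nn - 2 - int (v2n (m-K)))" using tv mk by simp
      moreover have "ex2 (t K) 0" using tv[of K] K1 vK nn by simp
      ultimately have "ex2 (2 * t (m-K) * t K) (1 + (int nn - 2 - int (v2n (m-K))) + 0)"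
        using ex2_mult[OF ex2_mult[OF ex2_pow2[of 1]]] by fastforce
      moreover have "v2n m = v2n (m - K)"
      proof -
        have "v2n (m-K) < v2n K" using v2n_lt[of "m-K" "nn-2"] mk K vK by simp
        then have "v2n ((m - K) + K) = v2n (m-K)" using v2n_add_lt[of "m-K" K] mk K1 by simp
        then show ?thesis using False by simp
      qed
      moreover have "m - (m - K) = K" using False by simp
      ultimately show ?thesis using False unfolding i0_def e_def by (simp add: algebra_simps)
    qed
    have rest: "lb2 (2 * t i * t (m - i)) (e + 1)" if "i \<in> L" "i \<noteq> i0" for i
    proof (cases "m - i < K")
      case True
      have "1 \<le> i"
      proof (rule ccontr)
        assume "\<not> 1 \<le> i" then have "i = 0" by simp
        then have "m < K" using True by simp
        then show False using \<open>i \<noteq> i0\<close> \<open>i = 0\<close> unfolding i0_def by simp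
      qed
      then show ?thesis using nondom that True by simp
    next
      case False
      show ?thesis
      proof (cases "m - i = K")
        case True
        have "i \<noteq> 0"
        proof
          assume "i = 0" then have "m = K" using True by simp
          then show False using \<open>i = 0\<close> \<open>i \<noteq> i0\<close> unfolding i0_def by simp
        qed
        then have "i = m - K" "K < m" using that True m unfolding L_def by auto
        then have "i = i0" unfolding i0_def by simp
        then show ?thesis using that by simp
      next
        case False
        then have "t (m - i) = 0" using tz \<open>\<not> m - i < K\<close> by simp
        then show ?thesis by simp
      qed
    qed
    have "ex2 (\<Sum>i\<in>L. 2 * t i * t (m - i)) e"
      by (rule ex2_sum[where g="\<lambda>i. 2 * t i * t (m - i)", OF finL i0L dom]) (use rest in auto)
    then have "ex2 ((\<Sum>i\<in>L. 2 * t i * t (m - i)) + (if even m then t (m div 2) * t (m div 2) else 0)) e"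
      using mid ex2_add by blast
    then show ?thesis using ss unfolding e_def by simp
  qed
qed


lemma T_cong: assumes "2 \<le> n" shows "pc (2^n) (T (Suc n)) (T n * T n)"
proof -
  define K where "K = (2::nat)^(n-2)"
  define N where "N = (2::nat)^n"
  have nn: "n = (n-2)+2" using assms by simp
  have N4: "N = 4*K" unfolding N_def K_def by (metis nn power_add mult.commute power2_eq_square numeral_Bit0 mult_2)
  have M2: "(2::nat)^(Suc n - 2) = 2*K"
  proof -
    have "Suc n - 2 = Suc (n-2)" using assms by simp
    then show ?thesis unfolding K_def by simp
  qed
  define f where "f i = [:int ((2*i+1) * (2^(Suc n) - (2*i+1))), 1:]" for i :: nat
  define g where "g i = [:int ((2*i+1) * (N - (2*i+1))), 1:]" for i :: nat
  have "T (Suc n) = (\<Prod>i<2*K. f i)" unfolding T_def f_def using M2 by simp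
  also have "\<dots> = (\<Prod>i<K. f i * f (2*K - 1 - i))" by (rule prod_pair)
  finally have e1: "T (Suc n) = (\<Prod>i<K. f i * f (2*K - 1 - i))" .
  have e2: "T n * T n = (\<Prod>i<K. g i * g i)" unfolding T_def g_def K_def N_def prod.distrib by (rule refl)
  have pcs: "pc (2^n) (f i * f (2*K - 1 - i)) (g i * g i)" if iK: "i < K" for i
  proof (rule pc_mult)
    define j where "j = 2*i+1"
    have jN: "j < N" using iK N4 j_def by simp
    have S: "(2::nat)^(Suc n) = 2 * N" unfolding N_def by simp
    have j': "2 * (2*K - 1 - i) + 1 = N - j" using iK N4 j_def by simp
    have jle: "j \<le> N" using jN by simp
    have jle2: "j \<le> 2*N" using jN by simp
    have i1: "int (j * (N - j)) = int j * (int N - int j)" by (simp only: of_nat_mult of_nat_diff[OF jle])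
    have i2: "int (j * (2^(Suc n) - j)) = int j * (2 * int N - int j)"
      unfolding S by (simp only: of_nat_mult of_nat_diff[OF jle2] of_nat_numeral)
    have e3: "2^(Suc n) - (N - j) = N + j" using S jN by simp
    have i3: "int ((N - j) * (2^(Suc n) - (N - j))) = (int N - int j) * (int N + int j)"
      unfolding e3 by (simp only: of_nat_mult of_nat_add of_nat_diff[OF jle])
    have d1: "int (j * (2^(Suc n) - j)) - int (j * (N - j)) = int j * int N"
      unfolding i1 i2 by (simp add: algebra_simps)
    have d2: "int ((N - j) * (2^(Suc n) - (N - j))) - int (j * (N - j)) = (int N - int j) * int N"
      unfolding i1 i3 by (simp add: algebra_simps)
    have NN: "int N = 2^n" unfolding N_def by simp
    show "pc (2^n) (f i) (g i)" unfolding f_def g_def j_def[symmetric]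
      by (rule pc_lin) (use d1 NN in simp)
    show "pc (2^n) (f (2*K - 1 - i)) (g i)" unfolding f_def g_def j_def[symmetric] j'
      by (rule pc_lin) (use d2 NN in simp)
  qed
  show ?thesis unfolding e1 e2 by (rule pc_prod) (use pcs in auto)
qed

lemma T_val: "2 \<le> n \<Longrightarrow> 1 \<le> l \<Longrightarrow> l \<le> 2^(n-2) \<Longrightarrow> ex2 (coeff (T n) l) (int n - 2 - int (v2n l))"
proof (induction n arbitrary: l rule: nat_induct_at_least)
  case base
  then have "l = 1" by simp
  then show ?case using T_top(1)[of 2] ex2_odd[of 1] by simp
next
  case (Suc n)
  define t where "t = coeff (T n)"
  have K2: "2 * 2^(n-2) = (2::nat)^(Suc n - 2)"
    using Suc.hyps by (metis Suc_diff_le pow_pred_gen diff_Suc_1 le_add_diff_inverse2 add_leE nat_le_linear Suc_1 Suc_le_mono one_le_numeral power_Suc)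
  have sq: "ex2 (\<Sum>i\<le>l. t i * t (l - i)) (int n - 1 - int (v2n l))"
  proof (rule sq_val[where K="2^(n-2)"])
    show "2 \<le> n" by (rule Suc.hyps)
    show "odd (t 0)" using T_0 Suc.hyps t_def by simp
    show "\<And>i. 1 \<le> i \<Longrightarrow> i \<le> 2^(n-2) \<Longrightarrow> ex2 (t i) (int n - 2 - int (v2n i))" using Suc.IH t_def by simp
    show "\<And>i. 2^(n-2) < i \<Longrightarrow> t i = 0" using T_top(2) t_def by simp
    show "1 \<le> l" by (rule Suc.prems(1))
    show "l \<le> 2 * 2^(n-2)" using Suc.prems(2) K2 by simp
  qed simp
  then have sq': "ex2 (coeff (T n * T n) l) (int n - 1 - int (v2n l))" by (simp add: coeff_mult t_def)
  have "ex2 (coeff (T (Suc n)) l) (int n - 1 - int (v2n l))"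
  proof (rule ex2_cong[OF sq'])
    show "2^n dvd coeff (T (Suc n)) l - coeff (T n * T n) l" using T_cong[OF Suc.hyps] unfolding pc_def by simp
    show "int n - 1 - int (v2n l) < int n" by simp
  qed
  then show ?case by simp
qed

definition A :: "nat \<Rightarrow> int poly" where
  "A n = (\<Prod>i<2^(n-1). [:int (2*i+1), 1:])"

lemma lin_lin: "[:a, 1:] * [:b, 1:] = [:a * b, a + b, 1::'a::comm_ring_1:]"
  by (simp add: algebra_simps)

lemma A_comp: assumes "2 \<le> n" shows "A n = pcompose (T n) [:0, 2^n, 1:]"
proof -
  define K where "K = (2::nat)^(n-2)"
  define N where "N = (2::nat)^n"
  have nn: "n = (n-2)+2" using assms by simp
  have N4: "N = 4*K" unfolding N_def K_def by (metis nn power_add mult.commute power2_eq_square numeral_Bit0 mult_2)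
  have M2: "(2::nat)^(n - 1) = 2*K"
  proof -
    have "n - 1 = Suc (n-2)" using assms by simp
    then show ?thesis unfolding K_def by simp
  qed
  have "A n = (\<Prod>i<2*K. [:int (2*i+1), 1:])" unfolding A_def M2 by simp
  also have "\<dots> = (\<Prod>i<K. [:int (2*i+1), 1:] * [:int (2*(2*K - 1 - i)+1), 1:])" by (rule prod_pair)
  also have "\<dots> = (\<Prod>i<K. [:int ((2*i+1) * (N - (2*i+1))), int N, 1:])"
  proof (rule prod.cong)
    fix i assume "i \<in> {..<K}"
    then have iK: "i < K" by simp
    have j': "2 * (2*K - 1 - i) + 1 = N - (2*i+1)" using iK N4 by simp
    have jN: "2*i+1 < N" using iK N4 by simp
    show "[:int (2*i+1), 1:] * [:int (2*(2*K - 1 - i)+1), 1:] = [:int ((2*i+1) * (N - (2*i+1))), int N, 1:]"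
    proof -
      have jle: "2*i+1 \<le> N" using jN by simp
      have i1: "int ((2*i+1) * (N - (2*i+1))) = int (2*i+1) * (int N - int (2*i+1))"
        by (simp only: of_nat_mult of_nat_diff[OF jle])
      have i2: "int (N - (2*i+1)) = int N - int (2*i+1)" by (simp only: of_nat_diff[OF jle])
      show ?thesis unfolding j' lin_lin i1 i2 by simp
    qed
  qed simp
  also have "\<dots> = pcompose (T n) [:0, 2^n, 1:]"
    unfolding T_def K_def[symmetric] N_def[symmetric] pcompose_prod
    by (rule prod.cong) (simp_all add: pcompose_pCons N_def)
  finally show ?thesis .
qed

lemma coeff_pcompose_sum: "coeff (pcompose p q) a = (\<Sum>l\<le>degree p. coeff p l * coeff (q^l) a)"
proof -
  have "pcompose p q = (\<Sum>l\<le>degree p. [:coeff p l:] * q^l)"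
    unfolding pcompose_altdef poly_altdef by (simp add: degree_map_poly coeff_map_poly)
  then show ?thesis by (simp add: coeff_sum)
qed

lemma qpow_coeff: "coeff ([:0, c, 1:]^l) a = (if l \<le> a \<and> a \<le> 2*l then of_nat (l choose (a - l)) * c^(2*l - a) else (0::'a::comm_ring_1))"
proof -
  have h: "[:0, c, 1:] = [:0, 1:] * [:c, 1::'a:]" by simp
  have "[:0, c, 1:]^l = [:0, 1:]^l * [:c, 1::'a:]^l" by (subst h, rule power_mult_distrib)
  moreover have "monom (1::'a) l = [:0, 1:]^l" by (simp add: monom_altdef)
  ultimately have "[:0, c, 1:]^l = monom 1 l * [:c, 1::'a:]^l" by simp
  then have e: "coeff ([:0, c, 1:]^l) a = (if a < l then 0 else coeff ([:c, 1::'a:]^l) (a - l))"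
    by (simp add: coeff_monom_mult)
  have dg: "degree ([:c, 1::'a:]^l) \<le> l" using degree_power_le[of "[:c, 1::'a:]" l] by simp
  show ?thesis
  proof (cases "l \<le> a \<and> a \<le> 2*l")
    case True
    then have "a - l \<le> l" by arith
    moreover have "l - (a - l) = 2*l - a" using True by arith
    ultimately show ?thesis using e True coeff_linear_poly_power[of "a-l" l c 1] by simp
  next
    case False
    show ?thesis
    proof (cases "a < l")
      case True then show ?thesis using e by simp
    next
      case nl: False
      then have "l < a - l" using False by simp
      then have "coeff ([:c, 1::'a:]^l) (a - l) = 0" using dg by (intro coeff_eq_0) simp
      then show ?thesis using e nl False by simp
    qed
  qed
qed

lemma T_degree: "degree (T n) = 2^(n-2)"
proof (rule antisym)
  show "degree (T n) \<le> 2^(n-2)" by (rule degree_le) (use T_top(2) in auto)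
  show "2^(n-2) \<le> degree (T n)" by (rule le_degree) (use T_top(1) in simp)
qed

lemma A_coeff: assumes "2 \<le> n"
  shows "coeff (A n) a = (\<Sum>l\<le>2^(n-2). coeff (T n) l * (if l \<le> a \<and> a \<le> 2*l then int (l choose (a-l)) * 2^(n*(2*l - a)) else 0))"
  unfolding A_comp[OF assms] coeff_pcompose_sum T_degree qpow_coeff by (intro sum.cong) (auto simp: power_mult)


lemma A_0: "odd (coeff (A n) 0)"
  unfolding A_def prod_lin_coeff0 by (simp add: even_prod_iff)

lemma A_top: "a > 2^(n-1) \<Longrightarrow> coeff (A n) a = 0"
  using prod_lin_top[where m="2^(n-1)" and c="\<lambda>i. int (2*i+1)"] unfolding A_def by auto

lemma v2n_le_K: "1 \<le> l \<Longrightarrow> l \<le> 2^(n-2) \<Longrightarrow> v2n l \<le> n - 2"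
  using v2n_le by simp

lemma K_pow: "2 \<le> n \<Longrightarrow> (2::nat)^(n-1) = 2 * 2^(n-2)"
proof -
  assume "2 \<le> n"
  then have "n - 1 = Suc (n-2)" by simp
  then show ?thesis by simp
qed

lemma A_ev: assumes n: "2 \<le> n" and ev: "even a" and a2: "2 \<le> a" and aM: "a \<le> 2^(n-1)"
  shows "ex2 (coeff (A n) a) (int n - 1 - int (v2n a))"
proof -
  define K where "K = (2::nat)^(n-2)"
  define h where "h l = coeff (T n) l * (if l \<le> a \<and> a \<le> 2*l then int (l choose (a-l)) * 2^(n*(2*l - a)) else 0)" for l
  have s: "coeff (A n) a = (\<Sum>l\<le>K. h l)" unfolding A_coeff[OF n] h_def K_def by simp
  define l0 where "l0 = a div 2"
  have al: "a = 2 * l0" using ev l0_def by simp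
  have l01: "1 \<le> l0" "l0 \<le> K" using a2 aM al K_pow[OF n] K_def by auto
  have va: "v2n a = Suc (v2n l0)" using al v2n_double[of l0] l01 by simp
  have dom: "ex2 (h l0) (int n - 1 - int (v2n a))"
  proof -
    have "h l0 = coeff (T n) l0" unfolding h_def using al by simp
    moreover have "ex2 (coeff (T n) l0) (int n - 2 - int (v2n l0))" using T_val n l01 K_def by simp
    ultimately show ?thesis using va by (simp add: algebra_simps)
  qed
  have rest: "lb2 (h l) (int n - 1 - int (v2n a) + 1)" if "l \<le> K" "l \<noteq> l0" for l
  proof (cases "l \<le> a \<and> a \<le> 2*l")
    case True
    then have d: "2 \<le> 2*l - a" using that al by auto
    have "h l = 2^(n*(2*l - a)) * (coeff (T n) l * int (l choose (a-l)))" unfolding h_def using True by simp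
    then have "lb2 (h l) (int (n*(2*l - a)))" using lb2_pow_mult[of "n*(2*l - a)"] by metis
    moreover have "int n - 1 - int (v2n a) + 1 \<le> int (n*(2*l - a))"
    proof -
      have "n * 2 \<le> n * (2*l - a)" using d by simp
      then show ?thesis by linarith
    qed
    ultimately show ?thesis using lb2_mono by blast
  next
    case False then have "h l = 0" unfolding h_def by auto
    then show ?thesis by simp
  qed
  show ?thesis unfolding s by (rule ex2_sum[where g=h]) (use dom rest l01 in auto)
qed

lemma A_odd: assumes n: "2 \<le> n" and od: "odd a" and aM: "a < 2^(n-1)"
  shows "lb2 (coeff (A n) a) (2 * int n - 2)"
proof -
  define K where "K = (2::nat)^(n-2)"
  define h where "h l = coeff (T n) l * (if l \<le> a \<and> a \<le> 2*l then int (l choose (a-l)) * 2^(n*(2*l - a)) else 0)" for l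
  have s: "coeff (A n) a = (\<Sum>l\<le>K. h l)" unfolding A_coeff[OF n] h_def K_def by simp
  have "lb2 (h l) (2 * int n - 2)" if "l \<le> K" for l
  proof (cases "l \<le> a \<and> a \<le> 2*l")
    case True
    show ?thesis
    proof (cases "2*l - a = 1")
      case True
      have l1: "1 \<le> l" "a - l = l - 1" using True \<open>l \<le> a \<and> a \<le> 2*l\<close> by auto
      have "l choose (l - 1) = l choose (l - (l - 1))" by (rule binomial_symmetric) simp
      then have ch: "l choose (a - l) = l" using l1 by simp
      have hl: "h l = (coeff (T n) l * int l) * 2^n" unfolding h_def using True \<open>l \<le> a \<and> a \<le> 2*l\<close> ch by simp
      have vl: "v2n l \<le> n - 2" using v2n_le_K l1 that K_def by simp
      have t: "lb2 (coeff (T n) l) (int n - 2 - int (v2n l))"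
        using T_val[OF n l1(1)] that K_def ex2_lb2 by simp
      have "lb2 (coeff (T n) l * int l) ((int n - 2 - int (v2n l)) + int (v2n l))"
        by (rule lb2_mult[OF t lb2_nat]) (use vl n in auto)
      then have "lb2 ((coeff (T n) l * int l) * 2^n) ((int n - 2 - int (v2n l)) + int (v2n l) + int n)"
        by (rule lb2_mult[OF _ ex2_lb2[OF ex2_pow2]]) (use vl n in auto)
      then show ?thesis using hl by simp
    next
      case False
      then have d: "3 \<le> 2*l - a" using True od by presburger
      have "h l = 2^(n*(2*l - a)) * (coeff (T n) l * int (l choose (a-l)))" unfolding h_def using True by simp
      then have "lb2 (h l) (int (n*(2*l - a)))" using lb2_pow_mult[of "n*(2*l - a)"] by metis
      moreover have "2 * int n - 2 \<le> int (n*(2*l - a))"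
      proof -
        have "n * 3 \<le> n * (2*l - a)" using d by simp
        then show ?thesis by linarith
      qed
      ultimately show ?thesis using lb2_mono by blast
    qed
  next
    case False then have "h l = 0" unfolding h_def by auto
    then show ?thesis by simp
  qed
  then show ?thesis unfolding s by (intro lb2_sum) auto
qed

definition B :: "nat \<Rightarrow> int poly" where
  "B n = (\<Prod>i<2^(n-1). [:2 * int (i+1), 1:])"

definition F :: "nat \<Rightarrow> int poly" where
  "F n = (\<Prod>i<2^n. [:int (i+1), 1:])"

lemma F_AB: assumes "1 \<le> n" shows "F n = A n * B n"
proof -
  have "(2::nat)^n = 2 * 2^(n-1)" using pow_pred_gen[of n "2::nat"] assms by simp
  then have "F n = (\<Prod>i<2^(n-1). [:int (2*i+1), 1:] * [:int (2*i+1+1), 1:])"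
    unfolding F_def by (simp only: prod_double)
  also have "\<dots> = (\<Prod>i<2^(n-1). [:int (2*i+1), 1:] * [:2 * int (i+1), 1:])"
    by (rule prod.cong) simp_all
  also have "\<dots> = A n * B n" unfolding A_def B_def by (rule prod.distrib)
  finally show ?thesis .
qed

lemma B_coeff: "coeff (B n) b = 2^(2^(n-1) - b) * coeff (F (n-1)) b"
  unfolding B_def F_def by (rule prod_lin_scale)

lemma F_top: "k > 2^n \<Longrightarrow> coeff (F n) k = 0"
  using prod_lin_top[where m="2^n" and c="\<lambda>i. int (i+1)"] unfolding F_def by auto

definition psi :: "nat \<Rightarrow> nat \<Rightarrow> int" where
  "psi n k = 2^n - int n * int k + kap k"

lemma K_A0:
  assumes k1: "1 \<le> k" and kM: "k \<le> 2^(n-1)" and n1: "1 \<le> n"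
  shows "kap k - kap 0 < int n * int k + LBa n k"
proof -
  define P where "P = cl k"
  have Pn: "P \<le> n - 1" using cl_le kM P_def by simp
  have sP: "sig k + 1 \<le> 2^P"
  proof (cases "2 \<le> P")
    case True
    then have "sig k \<le> 2 * int P - 3" using sig_le P_def by simp
    moreover have "2 * P \<le> (2::nat)^P" by (rule two_mult_le_pow)
    then have "2 * int P \<le> 2^P" by (metis of_nat_le_iff of_nat_mult of_nat_numeral of_nat_power)
    ultimately show ?thesis by simp
  next
    case False
    then have "sig k = 0" using sig_small P_def by simp
    moreover have "(1::int) \<le> 2^P" by simp
    ultimately show ?thesis by simp
  qed
  have kP: "int k * int P \<le> int k * (int n - 1)" using Pn n1 by (intro mult_left_mono) auto
  have LB: "0 \<le> LBa n k" using LBa_nonneg kM n1 by simp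
  have "kap k = int k * int P - 2^P + sig k" unfolding kap_def P_def using k1 by simp
  moreover have "kap 0 = -1" unfolding kap_def by simp
  ultimately show ?thesis using sP kP LB k1 by (simp add: algebra_simps)
qed


lemma even_ge2: "even (r::nat) \<Longrightarrow> 1 \<le> r \<Longrightarrow> 2 \<le> r"
  by (cases "r = 1") auto

lemma F_step:
  assumes n3: "3 \<le> n" and IH: "\<And>k. k \<le> 2^(n-1) \<Longrightarrow> ex2 (coeff (F (n-1)) k) (psi (n-1) k)"
    and kN: "k \<le> 2^n"
  shows "ex2 (coeff (F n) k) (psi n k)"
proof -
  define M where "M = (2::nat)^(n-1)"
  have pN: "(2::nat)^n = 2*M" using pow_pred_gen[of n "2::nat"] n3 M_def by simp
  have pNi: "(2::int)^n = 2 * int M" using pN by (metis of_nat_mult of_nat_numeral of_nat_power)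
  have Mi: "(2::int)^(n-1) = int M" unfolding M_def by simp
  have Mev: "even M" using n3 M_def by simp
  have n1: "1 \<le> n" "2 \<le> n" using n3 by auto
  define f' where "f' = coeff (F (n-1))"
  define g where "g a = coeff (A n) a * (2^(M - (k-a)) * f' (k - a))" for a
  have sm: "coeff (F n) k = (\<Sum>a\<le>k. g a)"
    unfolding F_AB[OF n1(1)] coeff_mult B_coeff g_def f'_def M_def by simp
  have psin: "psi n k = 2 * int M - int n * int k + kap k" unfolding psi_def using pNi by simp
  have psim: "\<And>b. psi (n-1) b = int M - (int n - 1) * int b + kap b" unfolding psi_def using Mi n1 by simp
  define bs where "bs = (if odd (k - M) then M - 1 else M)"
  define as where "as = (if k \<le> M then 0 else k - bs)"
  have asle: "as \<le> k" unfolding as_def by simp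
  have dom: "ex2 (g as) (psi n k)"
  proof (cases "k \<le> M")
    case True
    have a0: "ex2 (coeff (A n) 0) 0" using A_0 ex2_odd by blast
    have fk: "ex2 (f' k) (psi (n-1) k)" using IH True f'_def M_def by simp
    have "ex2 (coeff (A n) 0 * (2^(M - k) * f' k)) (0 + (int (M - k) + psi (n-1) k))"
      by (rule ex2_mult[OF a0 ex2_mult[OF ex2_pow2 fk]])
    moreover have "0 + (int (M - k) + psi (n-1) k) = psi n k"
    proof -
      have pk: "psi (n-1) k = int M - int n * int k + int k + kap k" using psim[of k] by (simp add: algebra_simps)
      have "int (M - k) = int M - int k" using True by simp
      then show ?thesis using pk psin by linarith
    qed
    ultimately show ?thesis unfolding g_def as_def using True by simp
  next
    case False
    then have kl: "2^(n-1) < k" using M_def by simp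
    have "(2::nat)^1 \<le> 2^(n-1)" by (rule power_increasing) (use n3 in auto)
    then have M2: "2 \<le> M" using M_def by simp
    have bsM: "bs \<le> M" "1 \<le> bs" using bs_def M2 by auto
    have ase: "as = k - bs" "k - as = bs" using False as_def bsM by auto
    have rr: "1 \<le> k - M" "k - M \<le> M" using False kN pN by auto
    have ev_all: "even as \<and> 2 \<le> as \<and> as \<le> M"
    proof (cases "odd (k - M)")
      case True
      then have "bs = M - 1" using bs_def by simp
      then have "as = (k - M) + 1" using ase(1) False M2 by simp
      moreover have "k - M \<noteq> M" using True Mev by metis
      ultimately show ?thesis using True rr by auto
    next
      case ev0: False
      then have "bs = M" using bs_def by simp
      then have "as = k - M" using ase(1) by simp
      moreover have "2 \<le> k - M" using even_ge2[of "k - M"] ev0 rr by blast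
      ultimately show ?thesis using ev0 rr by simp
    qed
    then have ev: "even as" "2 \<le> as" "as \<le> M" by auto
    have aev: "ex2 (coeff (A n) as) (int n - 1 - int (v2n as))" using A_ev[OF n1(2) ev(1) ev(2)] ev(3) M_def by simp
    have LB: "LBa n as = int n - 1 - int (v2n as)" using ev unfolding LBa_def by simp
    have fb: "ex2 (f' bs) (psi (n-1) bs)" using IH bsM f'_def M_def by simp
    have bsd: "bs = (if odd (k - 2^(n-1)) then 2^(n-1) - 1 else 2^(n-1))" unfolding bs_def M_def by (rule refl)
    have Keq: "kap k - kap bs = int n * int (k - bs) + LBa n (k - bs)"
      by (rule K_eq[OF n3 kl kN bsd])
    have "ex2 (coeff (A n) as * (2^(M - bs) * f' bs)) ((int n - 1 - int (v2n as)) + (int (M - bs) + psi (n-1) bs))"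
      by (rule ex2_mult[OF aev ex2_mult[OF ex2_pow2 fb]])
    moreover have "(int n - 1 - int (v2n as)) + (int (M - bs) + psi (n-1) bs) = psi n k"
    proof -
      have kb: "int (k - bs) = int k - int bs" using ase asle by simp
      have nkb: "int n * int (k - bs) = int n * int k - int n * int bs" unfolding kb by (simp add: algebra_simps)
      have pb: "psi (n-1) bs = int M - int n * int bs + int bs + kap bs" using psim[of bs] by (simp add: algebra_simps)
      have Mb: "int (M - bs) = int M - int bs" using bsM by simp
      have LB': "LBa n (k - bs) = int n - 1 - int (v2n as)" using LB ase by simp
      show ?thesis using Keq nkb pb Mb LB' psin by linarith
    qed
    ultimately show ?thesis unfolding g_def using ase by simp
  qed
  have rest: "lb2 (g a) (psi n k + 1)" if ak: "a \<le> k" and ne: "a \<noteq> as" for a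
  proof (cases "M < a \<or> M < k - a")
    case True
    then have "g a = 0" unfolding g_def f'_def using A_top[of "2^(n-1)" a] F_top[of "n-1" "k-a"] M_def
      by (auto simp: A_top F_top)
    then show ?thesis by simp
  next
    case False
    define b where "b = k - a"
    have aM: "a \<le> M" and bM: "b \<le> M" using False b_def by auto
    have kab: "k = a + b" using ak b_def by simp
    have LB0: "0 \<le> LBa n a" using LBa_nonneg[of a n] aM n1 M_def by simp
    have lba: "lb2 (coeff (A n) a) (LBa n a)"
    proof (cases "a = 0")
      case True then show ?thesis using A_0 ex2_odd ex2_lb2 unfolding LBa_def by auto
    next
      case a0: False
      show ?thesis
      proof (cases "even a")
        case True
        then have "2 \<le> a" using a0 by (cases "a = 1") auto
        then have "ex2 (coeff (A n) a) (int n - 1 - int (v2n a))" using A_ev[OF n1(2) True] aM M_def by simp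
        then show ?thesis using True a0 ex2_lb2 unfolding LBa_def by simp
      next
        case False
        then have "a < M" using aM Mev by (cases "a = M") auto
        then have "lb2 (coeff (A n) a) (2 * int n - 2)" using A_odd[OF n1(2) False] M_def by simp
        then show ?thesis using False a0 unfolding LBa_def by simp
      qed
    qed
    have fb: "ex2 (f' b) (psi (n-1) b)" using IH bM f'_def M_def by simp
    have pb0: "0 \<le> psi (n-1) b" using ex2_nonneg fb by blast
    have l2: "lb2 (2^(M - b) * f' b) (int (M - b) + psi (n-1) b)"
      using ex2_lb2[OF ex2_mult[OF ex2_pow2 fb]] by simp
    have lg: "lb2 (g a) (LBa n a + (int (M - b) + psi (n-1) b))"
      unfolding g_def b_def[symmetric] by (rule lb2_mult[OF lba l2 LB0]) (use pb0 in simp)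
    have Kin: "kap k - kap b < int n * int a + LBa n a"
    proof (cases "k \<le> M")
      case True
      then have a0: "a \<noteq> 0" using ne as_def by simp
      show ?thesis
      proof (cases "b = 0")
        case True
        then have "a = k" using kab by simp
        then show ?thesis using K_A0[of k n] a0 True \<open>k \<le> M\<close> n1 M_def by simp
      next
        case False
        have "kap k - kap b < int n * int (k - b) + LBa n (k - b)"
          by (rule K_A) (use False a0 kab \<open>k \<le> M\<close> n1 M_def in auto)
        then show ?thesis using kab by simp
      qed
    next
      case False
      have nd: "b \<noteq> (if odd (k - 2^(n-1)) then 2^(n-1) - 1 else 2^(n-1))"
      proof
        assume "b = (if odd (k - 2^(n-1)) then 2^(n-1) - 1 else 2^(n-1))"
        then have "b = bs" unfolding bs_def M_def by simp
        then have "a = as" using kab as_def False by simp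
        then show False using ne by simp
      qed
      have "kap k - kap b < int n * int (k - b) + LBa n (k - b)"
        by (rule K_B[OF n3 _ kN _ _ nd]) (use False bM aM kab M_def in auto)
      then show ?thesis using kab by simp
    qed
    have "psi n k + 1 \<le> LBa n a + (int (M - b) + psi (n-1) b)"
    proof -
      have pb: "psi (n-1) b = int M - int n * int b + int b + kap b" using psim[of b] by (simp add: algebra_simps)
      have Mb: "int (M - b) = int M - int b" using bM by simp
      have nk: "int n * int k = int n * int a + int n * int b" using kab by (simp add: algebra_simps)
      show ?thesis using Kin pb Mb nk psin by linarith
    qed
    then show ?thesis using lg lb2_mono by blast
  qed
  show ?thesis unfolding sm by (rule ex2_sum[where g=g]) (use dom rest asle in auto)
qed

lemma ex2I: "x = 2^m * u \<Longrightarrow> odd u \<Longrightarrow> ex2 x (int m)"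
  unfolding ex2_def by auto

lemma F1: "F 1 = [:2, 3, 1:]"
  unfolding F_def by (simp add: numeral_2_eq_2 lessThan_Suc)

lemma F2: "F 2 = [:24, 50, 35, 10, 1:]"
  unfolding F_def by (simp add: eval_nat_numeral lessThan_Suc)
lemma F1': "F (Suc 0) = [:2, 3, 1:]" using F1 by simp
lemma F2': "F (Suc (Suc 0)) = [:24, 50, 35, 10, 1:]" using F2 by (simp add: numeral_2_eq_2)

lemma v2n_2: "v2n 2 = 1" using v2n_pow2[of 1] by simp
lemma v2n_2': "v2n (Suc (Suc 0)) = 1" using v2n_2 by (simp add: numeral_2_eq_2)

lemma cl_2: "cl 2 = 1" by (rule cl_eqI) auto
lemma cl_3: "cl 3 = 2" by (rule cl_eqI) auto
lemma cl_4: "cl 4 = 2" by (rule cl_eqI) auto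

lemma kap_vals: "kap 0 = -1" "kap 1 = -1" "kap 2 = 0" "kap 3 = 3" "kap 4 = 4"
proof -
  show "kap 0 = -1" unfolding kap_def by simp
  show "kap 1 = -1" unfolding kap_def using sig_small[of 1] by simp
  show "kap 2 = 0" unfolding kap_def using sig_small[of 2] cl_2 by simp
  have "sig 3 = 1" using sig_r[of 2 3] v2n_2 v2n_2' by simp
  then show "kap 3 = 3" unfolding kap_def using cl_3 by simp
  have "sig 4 = 0" using sig_r[of 2 4] v2n_2 v2n_2' by simp
  then show "kap 4 = 4" unfolding kap_def using cl_4 by simp
qed

lemma F_val: "1 \<le> n \<Longrightarrow> k \<le> 2^n \<Longrightarrow> ex2 (coeff (F n) k) (psi n k)"
proof (induction n arbitrary: k rule: nat_induct_at_least)
  case base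
  then have "k = 0 \<or> k = 1 \<or> k = 2" by auto
  then show ?case
  proof (elim disjE)
    assume "k = 0" then show ?thesis using ex2I[of 2 1 1] using kap_vals by (simp add: F1 F1' psi_def eval_nat_numeral)
  next
    assume "k = 1" then show ?thesis using ex2I[of 3 0 3] using kap_vals by (simp add: F1 F1' psi_def eval_nat_numeral)
  next
    assume "k = 2" then show ?thesis using ex2I[of 1 0 1] using kap_vals by (simp add: F1 F1' psi_def eval_nat_numeral)
  qed
next
  case (Suc n)
  show ?case
  proof (cases "n = 1")
    case True
    then have "k \<le> 4" using Suc by simp
    then have "k = 0 \<or> k = 1 \<or> k = 2 \<or> k = 3 \<or> k = 4" by auto
    then show ?thesis
    proof (elim disjE)
      assume "k = 0" then show ?thesis using True ex2I[of 24 3 3] using kap_vals by (simp add: F2 F2' psi_def eval_nat_numeral)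
    next
      assume "k = 1" then show ?thesis using True ex2I[of 50 1 25] using kap_vals by (simp add: F2 F2' psi_def eval_nat_numeral)
    next
      assume "k = 2" then show ?thesis using True ex2I[of 35 0 35] using kap_vals by (simp add: F2 F2' psi_def eval_nat_numeral)
    next
      assume "k = 3" then show ?thesis using True ex2I[of 10 1 5] using kap_vals by (simp add: F2 F2' psi_def eval_nat_numeral)
    next
      assume "k = 4" then show ?thesis using True ex2I[of 1 0 1] using kap_vals by (simp add: F2 F2' psi_def eval_nat_numeral)
    qed
  next
    case False
    then have n3: "3 \<le> Suc n" using Suc.hyps by simp
    show ?thesis by (rule F_step[OF n3]) (use Suc in auto)
  qed
qed


lemma lin1_mult_coeff: "coeff ([:1, a:] * (p::'a::comm_ring_1 poly)) k = coeff p k + (if k = 0 then 0 else a * coeff p (k - 1))"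
proof -
  have "[:1, a:] * p = p + pCons 0 (smult a p)" by (simp add: algebra_simps)
  then show ?thesis by (cases k) auto
qed

lemma subsets_insert_card:
  assumes "x \<notin> Y" "finite Y"
  shows "{S. S \<subseteq> insert x Y \<and> card S = Suc k} =
         {S. S \<subseteq> Y \<and> card S = Suc k} \<union> insert x ` {S. S \<subseteq> Y \<and> card S = k}"
proof (rule set_eqI, rule iffI)
  fix S assume "S \<in> {S. S \<subseteq> insert x Y \<and> card S = Suc k}"
  then have S: "S \<subseteq> insert x Y" "card S = Suc k" by auto
  show "S \<in> {S. S \<subseteq> Y \<and> card S = Suc k} \<union> insert x ` {S. S \<subseteq> Y \<and> card S = k}"
  proof (cases "x \<in> S")
    case True
    have fS: "finite S" using S(1) assms(2) finite_subset by blast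
    have "S = insert x (S - {x})" using True by auto
    moreover have "S - {x} \<subseteq> Y" using S(1) by auto
    moreover have "card (S - {x}) = k" using S(2) True fS by simp
    ultimately show ?thesis by blast
  next
    case False
    then show ?thesis using S by auto
  qed
next
  fix S assume "S \<in> {S. S \<subseteq> Y \<and> card S = Suc k} \<union> insert x ` {S. S \<subseteq> Y \<and> card S = k}"
  then show "S \<in> {S. S \<subseteq> insert x Y \<and> card S = Suc k}"
  proof
    assume "S \<in> {S. S \<subseteq> Y \<and> card S = Suc k}" then show ?thesis by auto
  next
    assume "S \<in> insert x ` {S. S \<subseteq> Y \<and> card S = k}"
    then obtain T where T: "S = insert x T" "T \<subseteq> Y" "card T = k" by auto
    have "finite T" using T(2) assms(2) finite_subset by blast
    moreover have "x \<notin> T" using T(2) assms(1) by auto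
    ultimately show ?thesis using T by auto
  qed
qed

lemma coeff_prod_esym:
  fixes c :: "nat \<Rightarrow> 'a::comm_ring_1"
  assumes "finite Y"
  shows "coeff (\<Prod>i\<in>Y. [:1, c i:]) k = (\<Sum>S | S \<subseteq> Y \<and> card S = k. \<Prod>i\<in>S. c i)"
  using assms
proof (induction Y arbitrary: k rule: finite_induct)
  case empty
  show ?case
  proof (cases "k = 0")
    case True
    have e: "{S. S \<subseteq> {} \<and> card S = k} = {{}}" using True by auto
    show ?thesis unfolding e using True by simp
  next
    case False
    have e: "{S. S \<subseteq> {} \<and> card S = k} = {}" using False by auto
    show ?thesis unfolding e using False by (simp add: coeff_1)
  qed
next
  case (insert x Y)
  have fins: "finite {S. S \<subseteq> Y \<and> card S = j}" for j
  proof (rule finite_subset[of _ "Pow Y"])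
    show "{S. S \<subseteq> Y \<and> card S = j} \<subseteq> Pow Y" by blast
    show "finite (Pow Y)" using insert(1) by simp
  qed
  show ?case
  proof (cases k)
    case 0
    have c0: "{S. S \<subseteq> Z \<and> card S = 0} = {{}}" if "finite Z" for Z :: "nat set"
    proof (rule set_eqI, rule iffI)
      fix S assume "S \<in> {S. S \<subseteq> Z \<and> card S = 0}"
      then have "S \<subseteq> Z" "card S = 0" by auto
      moreover have "finite S" using \<open>S \<subseteq> Z\<close> that by (rule finite_subset)
      ultimately show "S \<in> {{}}" by simp
    qed simp
    have e1: "{S. S \<subseteq> insert x Y \<and> card S = 0} = {{}}" using c0 insert(1) by simp
    have e2: "{S. S \<subseteq> Y \<and> card S = 0} = {{}}" using c0 insert(1) by simp
    have h: "coeff (\<Prod>i\<in>Y. [:1, c i:]) 0 = 1" using insert(3)[of 0] unfolding e2 by simp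
    have "coeff (\<Prod>i\<in>insert x Y. [:1, c i:]) 0 = 1"
      using h by (simp only: prod.insert[OF insert(1) insert(2)] lin1_mult_coeff) simp
    then show ?thesis unfolding e1 0 by simp
  next
    case (Suc j)
    have disj: "{S. S \<subseteq> Y \<and> card S = Suc j} \<inter> insert x ` {S. S \<subseteq> Y \<and> card S = j} = {}"
      using insert(2) by auto
    have inj: "inj_on (insert x) {S. S \<subseteq> Y \<and> card S = j}"
    proof (rule inj_onI)
      fix S T assume "S \<in> {S. S \<subseteq> Y \<and> card S = j}" "T \<in> {S. S \<subseteq> Y \<and> card S = j}" "insert x S = insert x T"
      moreover have "x \<notin> S" "x \<notin> T" using calculation(1,2) insert(2) by auto
      ultimately show "S = T" using insert_ident by metis
    qed
    have "(\<Sum>S | S \<subseteq> insert x Y \<and> card S = Suc j. \<Prod>i\<in>S. c i) =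
          (\<Sum>S | S \<subseteq> Y \<and> card S = Suc j. \<Prod>i\<in>S. c i) + (\<Sum>S\<in>insert x ` {S. S \<subseteq> Y \<and> card S = j}. \<Prod>i\<in>S. c i)"
      unfolding subsets_insert_card[OF insert(2) insert(1)]
      by (rule sum.union_disjoint) (use fins disj in auto)
    also have "(\<Sum>S\<in>insert x ` {S. S \<subseteq> Y \<and> card S = j}. \<Prod>i\<in>S. c i) =
               (\<Sum>S | S \<subseteq> Y \<and> card S = j. \<Prod>i\<in>insert x S. c i)"
      by (rule sum.reindex[OF inj, unfolded comp_def])
    also have "\<dots> = (\<Sum>S | S \<subseteq> Y \<and> card S = j. c x * (\<Prod>i\<in>S. c i))"
    proof (rule sum.cong)
      fix S assume "S \<in> {S. S \<subseteq> Y \<and> card S = j}"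
      then have "finite S" "x \<notin> S" using insert(1,2) finite_subset by auto
      then show "(\<Prod>i\<in>insert x S. c i) = c x * (\<Prod>i\<in>S. c i)" by simp
    qed simp
    finally have e: "(\<Sum>S | S \<subseteq> insert x Y \<and> card S = k. \<Prod>i\<in>S. c i) =
         coeff (\<Prod>i\<in>Y. [:1, c i:]) (Suc j) + c x * coeff (\<Prod>i\<in>Y. [:1, c i:]) j"
      using insert(3) Suc by (simp add: sum_distrib_left)
    show ?thesis using insert(1,2) Suc e by (simp add: lin1_mult_coeff)
  qed
qed


lemma H_coeff: "H N k = coeff (\<Prod>i\<in>{1..N}. [:1, 1 / of_nat i:]) k"
  unfolding H_def by (rule coeff_prod_esym[symmetric]) simp

lemma rat_int_prod: "coeff (\<Prod>i<m. [:(of_nat (i+1))::rat, 1:]) k = of_int (coeff (\<Prod>i<m. [:int (i+1), 1:]) k)"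
proof (induction m arbitrary: k)
  case 0 then show ?case by (simp add: coeff_1)
next
  case (Suc m)
  show ?case by (simp only: prod.lessThan_Suc lin_mult_coeff Suc) simp
qed

lemma H_F: assumes "1 \<le> n"
  shows "H (2^n) k = of_int (coeff (F n) k) / of_int (coeff (F n) 0)"
proof -
  define N where "N = (2::nat)^n"
  have a: "(\<Prod>i\<in>{1..N}. [:1, 1 / of_nat i:]) = (\<Prod>i\<in>{1..N}. smult (1 / of_nat i) [:of_nat i, 1::rat:])"
    by (rule prod.cong) auto
  have b: "{1..N} = Suc ` {..<N}" by (simp add: image_Suc_lessThan)
  have c: "(\<Prod>i\<in>{1..N}. [:of_nat i, 1::rat:]) = (\<Prod>i<N. [:of_nat (i+1), 1::rat:])"
    unfolding b by (subst prod.reindex) auto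
  have d: "(\<Prod>i\<in>{1..N}. (1 / of_nat i :: rat)) = 1 / (\<Prod>i<N. of_nat (i+1))"
    unfolding b by (subst prod.reindex) (auto simp: prod_dividef)
  have e: "coeff (F n) 0 = (\<Prod>i<N. int (i+1))" unfolding F_def N_def by (rule prod_lin_coeff0)
  have c2: "coeff (\<Prod>i<N. [:of_nat (i+1), 1::rat:]) k = of_int (coeff (F n) k)"
    unfolding F_def N_def by (rule rat_int_prod)
  have e2: "(\<Prod>i<N. (of_nat (i+1) :: rat)) = of_int (coeff (F n) 0)"
    unfolding e by simp
  have "H (2^n) k = coeff (\<Prod>i\<in>{1..N}. [:1, 1 / of_nat i:]) k" using H_coeff N_def by simp
  also have "\<dots> = (\<Prod>i\<in>{1..N}. (1 / of_nat i :: rat)) * coeff (\<Prod>i<N. [:of_nat (i+1), 1::rat:]) k"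
    unfolding a prod_smult c by simp
  also have "\<dots> = of_int (coeff (F n) k) / of_int (coeff (F n) 0)"
    unfolding d c2 e2 by simp
  finally show ?thesis .
qed

lemma ex2_nz: "ex2 x e \<Longrightarrow> x \<noteq> 0"
  unfolding ex2_def by auto

lemma ex2_mult_eq: "ex2 x e \<Longrightarrow> multiplicity 2 x = nat e"
  by (rule multiplicity_eqI) (use ex2_dvd ex2_not_dvd in auto)

lemma v2_frac: assumes "a \<noteq> 0" "b \<noteq> 0"
  shows "v2 (of_int a / of_int b) = int (multiplicity 2 a) - int (multiplicity 2 b)"
proof -
  obtain p q where pq: "quotient_of (of_int a / of_int b) = (p, q)" by (cases "quotient_of (of_int a / of_int b)")
  have q0: "q > 0" using quotient_of_denom_pos[OF pq] .
  have eq: "(of_int a / of_int b :: rat) = of_int p / of_int q" using quotient_of_div[OF pq] .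
  have "of_int a * of_int q = (of_int p * of_int b :: rat)" using eq assms q0 by (simp add: field_simps)
  then have aq: "a * q = p * b" by (metis of_int_eq_iff of_int_mult)
  have p0: "p \<noteq> 0" using aq assms q0 by auto
  have "multiplicity 2 (a * q) = multiplicity 2 a + multiplicity 2 q"
    by (rule prime_elem_multiplicity_mult_distrib) (use assms q0 in auto)
  moreover have "multiplicity 2 (p * b) = multiplicity 2 p + multiplicity 2 b"
    by (rule prime_elem_multiplicity_mult_distrib) (use assms p0 in auto)
  ultimately have "int (multiplicity 2 p) - int (multiplicity 2 q) = int (multiplicity 2 a) - int (multiplicity 2 b)"
    using aq by simp
  then show ?thesis unfolding v2_def pq by simp
qed

lemma pow_3P: "2 \<le> P \<Longrightarrow> 3 * P \<le> (2::nat)^P + 2"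
proof (induction P rule: nat_induct_at_least)
  case (Suc P)
  have "(2::nat)^(Suc P) = 2 * 2^P" by simp
  then show ?case using Suc by simp
qed simp

lemma final_ineq: assumes "1 \<le> n" "1 \<le> k" "k \<le> 2^n"
  shows "kap k + 1 - int n * int k \<le> - int n"
proof -
  define P where "P = cl k"
  have Pn: "P \<le> n" using cl_le assms P_def by simp
  have kap: "kap k = int k * int P - 2^P + sig k" unfolding kap_def P_def using assms by simp
  show ?thesis
  proof (cases "2 \<le> P")
    case True
    have s: "sig k \<le> 2 * int P - 3" using sig_le True P_def by simp
    have "3 * P \<le> (2::nat)^P + 2" using pow_3P True by simp
    then have "int (3 * P) \<le> int ((2::nat)^P + 2)" by (simp only: of_nat_le_iff)
    then have p3: "3 * int P \<le> 2^P + 2" by simp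
    have m: "(int n - int P) * 1 \<le> (int n - int P) * int k" using Pn assms by (intro mult_left_mono) auto
    have m2: "(int n - int P) * int k = int n * int k - int k * int P" by (simp add: algebra_simps)
    have m3: "int n - int P \<le> int n * int k - int k * int P" using m m2 by simp
    have "kap k + 1 - int n * int k \<le> int k * int P - 2^P + (2 * int P - 3) + 1 - int n * int k"
      using kap s by simp
    also have "\<dots> \<le> - int n" using m3 p3 by simp
    finally show ?thesis .
  next
    case False
    then have s: "sig k = 0" using sig_small P_def by simp
    have "k \<le> 2^P" using cl_ub P_def by simp
    moreover have "(2::nat)^P \<le> 2"
    proof -
      have "(2::nat)^P \<le> 2^1" by (rule power_increasing) (use False in simp_all)
      then show ?thesis by simp
    qed
    ultimately have "k = 1 \<or> k = 2" using assms by auto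
    then show ?thesis
    proof
      assume "k = 1" then show ?thesis using kap_vals by simp
    next
      assume "k = 2" then show ?thesis using kap_vals assms by simp
    qed
  qed
qed

theorem corollary1p5:
  fixes n k :: nat
  assumes "0 < n" and "0 < k" and "k \<le> 2 ^ n"
  shows "v2 (H (2 ^ n) k) \<le> - int n"
proof -
  have n1: "1 \<le> n" using assms(1) by simp
  have k1: "1 \<le> k" using assms(2) by simp
  have ek: "ex2 (coeff (F n) k) (psi n k)" by (rule F_val[OF n1 assms(3)])
  have e0: "ex2 (coeff (F n) 0) (psi n 0)" by (rule F_val[OF n1]) simp
  have nzk: "coeff (F n) k \<noteq> 0" by (rule ex2_nz[OF ek])
  have nz0: "coeff (F n) 0 \<noteq> 0" by (rule ex2_nz[OF e0])
  have v: "v2 (H (2^n) k) = int (multiplicity 2 (coeff (F n) k)) - int (multiplicity 2 (coeff (F n) 0))"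
    unfolding H_F[OF n1] by (rule v2_frac[OF nzk nz0])
  have mk: "int (multiplicity 2 (coeff (F n) k)) = psi n k"
    using ex2_mult_eq[OF ek] ex2_nonneg[OF ek] by simp
  have m0: "int (multiplicity 2 (coeff (F n) 0)) = psi n 0"
    using ex2_mult_eq[OF e0] ex2_nonneg[OF e0] by simp
  have p: "psi n k - psi n 0 = kap k + 1 - int n * int k"
    unfolding psi_def using kap_vals(1) by simp
  have f: "kap k + 1 - int n * int k \<le> - int n" by (rule final_ineq[OF n1 k1 assms(3)])
  show ?thesis using v mk m0 p f by linarith
qed


end
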